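(* Assume (H2) below. Let either $f\in\mathcal B_b(S)$ with $(\mu,f)=0$, in which case $\overline M^\pi_n(f)=n^{-1}\sum_{i=1}^nf(X_{\pi(i)})$, or $f\in\mathcal B_b(S^3)$ with $(\mu,Pf)=0$, in which case $\overline M^\pi_n(f)=n^{-1}\sum_{i=1}^nf(\Delta_{\pi(i)})$. Then $\overline M^\pi_n(f)$ converges almost surely to $0$ as $n\to\infty$.
   Context: Binary tree: $\mathbb T=\mathbb N^*$, vertex $n$ having daughters $2n,2n+1$; $\mathbb G_r=\{2^r,\dots,2^{r+1}-1\}$, $\mathbb T_r=\bigcup_{q=0}^r\mathbb G_q$. $(S,\mathcal S)$ is a metric space with Borel $\sigma$-field; $\mathcal B_b(S^p)$ denotes bounded measurable real functions on $S^p$. A $\mathbb T$-transition probability $P$ is a Markov kernel from $S$ to $S^2$; $P_0(x,B)=P(x,B\times S)$, $P_1(x,B)=P(x,S\times B)$, $Q=(P_0+P_1)/2$, $Pf(x)=\int f(x,y,z)P(x,dy\,dz)$. $(X_n)_{n\in\mathbb T}$ is a bifurcating Markov chain with initial law $\nu$ and $\mathbb T$-transition probability $P$: with $\mathcal F_r=\sigma(X_i,i\in\mathbb T_r)$, $\mathcal L(X_1)=\nu$ and for every $r$ and every family $(f_n)_{n\in\mathbb G_r}\subset\mathcal B_b(S^3)$, $\mathbb E[\prod_{n\in\mathbb G_r}f_n(X_n,X_{2n},X_{2n+1})\mid\mathcal F_r]=\prod_{n\in\mathbb G_r}Pf_n(X_n)$. $\Delta_i=(X_i,X_{2i},X_{2i+1})$.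 $\pi$ is a random permutation of $\mathbb N^*$ leaving each $\mathbb G_r$ invariant, drawn uniformly among such permutations, independently of $X$. $\mu$ is a probability measure on $S$, $(\mu,g)=\int gd\mu$. Hypothesis (H2): there is $\alpha\in(0,1)$ such that for every $g\in\mathcal B_b(S)$ with $(\mu,g)=0$ there exists $c>0$ with $|Q^rg(x)|\le c\alpha^r$ for all $r\in\mathbb N$, $x\in S$. *)

theory Defs
  imports "HOL-Probability.Probability"
begin

text \<open>Generations of the binary tree (vertices are positive naturals, n has daughters 2n, 2n+1).\<close>
definition gen :: "nat \<Rightarrow> nat set" where
  "gen r = {2^r ..< 2^(r+1)}"

definition tree_upto :: "nat \<Rightarrow> nat set" where
  "tree_upto r = (\<Union>q\<le>r. gen q)"

definition bounded_meas :: "'a measure \<Rightarrow> ('a \<Rightarrow> real) set" where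
  "bounded_meas A = {f. f \<in> borel_measurable A \<and> (\<exists>C. \<forall>x\<in>space A. \<bar>f x\<bar> \<le> C)}"

abbreviation S2 :: "('a::metric_space \<times> 'a) measure" where
  "S2 \<equiv> borel \<Otimes>\<^sub>M borel"

abbreviation S3 :: "('a::metric_space \<times> 'a \<times> 'a) measure" where
  "S3 \<equiv> borel \<Otimes>\<^sub>M (borel \<Otimes>\<^sub>M borel)"

definition T_transition :: "('a::metric_space \<Rightarrow> ('a \<times> 'a) measure) \<Rightarrow> bool" where
  "T_transition P \<longleftrightarrow> P \<in> measurable borel (prob_algebra S2)"

definition Pop :: "('a \<Rightarrow> ('a \<times> 'a) measure) \<Rightarrow> ('a \<times> 'a \<times> 'a \<Rightarrow> real) \<Rightarrow> 'a \<Rightarrow> real" where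
  "Pop P f x = (\<integral>yz. f (x, fst yz, snd yz) \<partial>(P x))"

definition Qop :: "('a \<Rightarrow> ('a \<times> 'a) measure) \<Rightarrow> ('a \<Rightarrow> real) \<Rightarrow> 'a \<Rightarrow> real" where
  "Qop P g x = ((\<integral>yz. g (fst yz) \<partial>(P x)) + (\<integral>yz. g (snd yz) \<partial>(P x))) / 2"

definition nat_filtr :: "'b measure \<Rightarrow> (nat \<Rightarrow> 'b \<Rightarrow> 'a::topological_space) \<Rightarrow> nat \<Rightarrow> 'b measure" where
  "nat_filtr M X r = sigma (space M) {X i -` B \<inter> space M | i B. i \<in> tree_upto r \<and> B \<in> sets borel}"

definition BMC :: "'b measure \<Rightarrow> (nat \<Rightarrow> 'b \<Rightarrow> 'a::metric_space) \<Rightarrow> 'a measure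
    \<Rightarrow> ('a \<Rightarrow> ('a \<times> 'a) measure) \<Rightarrow> bool" where
  "BMC M X \<nu> P \<longleftrightarrow>
     (\<forall>n. X n \<in> borel_measurable M) \<and>
     distr M borel (X 1) = \<nu> \<and>
     (\<forall>r (f :: nat \<Rightarrow> 'a \<times> 'a \<times> 'a \<Rightarrow> real). (\<forall>n\<in>gen r. f n \<in> bounded_meas S3) \<longrightarrow>
        (AE \<omega> in M. real_cond_exp M (nat_filtr M X r)
              (\<lambda>\<omega>. \<Prod>n\<in>gen r. f n (X n \<omega>, X (2*n) \<omega>, X (2*n+1) \<omega>)) \<omega>
            = (\<Prod>n\<in>gen r. Pop P (f n) (X n \<omega>))))"

text \<open>pi is a random permutation of N* leaving each generation invariant, uniformly distributed
  among such permutations (i.e. independent uniform permutations of each generation), and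
  independent of the process X.\<close>
definition gen_perm :: "(nat \<Rightarrow> nat) \<Rightarrow> bool" where
  "gen_perm \<sigma> \<longleftrightarrow> (\<forall>r. bij_betw \<sigma> (gen r) (gen r))"

definition uniform_gen_perm :: "'b measure \<Rightarrow> ('b \<Rightarrow> nat \<Rightarrow> nat) \<Rightarrow> (nat \<Rightarrow> 'b \<Rightarrow> 'a::metric_space) \<Rightarrow> bool" where
  "uniform_gen_perm M \<pi> X \<longleftrightarrow>
     (\<forall>\<omega>\<in>space M. gen_perm (\<pi> \<omega>)) \<and>
     (\<forall>i. (\<lambda>\<omega>. \<pi> \<omega> i) \<in> measurable M (count_space UNIV)) \<and>
     (\<forall>r \<sigma>. gen_perm \<sigma> \<longrightarrow>
        measure M {\<omega>\<in>space M. \<forall>i\<in>tree_upto r. \<pi> \<omega> i = \<sigma> i}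
          = 1 / (\<Prod>q\<le>r. fact (2^q))) \<and>
     prob_space.indep_set M
       {\<pi> -` B \<inter> space M | B. B \<in> sets (Pi\<^sub>M UNIV (\<lambda>_. count_space UNIV))}
       {(\<lambda>\<omega> n. X n \<omega>) -` B \<inter> space M | B. B \<in> sets (Pi\<^sub>M UNIV (\<lambda>_. borel))}"

definition H2 :: "('a::metric_space \<Rightarrow> ('a \<times> 'a) measure) \<Rightarrow> 'a measure \<Rightarrow> bool" where
  "H2 P \<mu> \<longleftrightarrow> (\<exists>\<alpha>::real. 0 < \<alpha> \<and> \<alpha> < 1 \<and>
     (\<forall>g \<in> bounded_meas (borel :: 'a measure). (\<integral>x. g x \<partial>\<mu>) = 0 \<longrightarrow>
        (\<exists>c>0. \<forall>r x. \<bar>(Qop P ^^ r) g x\<bar> \<le> c * \<alpha>^r)))"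

end

theory Submission
  imports Defs
begin

lemma Pop_alt: "Pop P f x = (\<integral>yz. f (x, yz) \<partial>(P x))"
  unfolding Pop_def by simp

lemma Pop_measurable:
  assumes TP: "T_transition P" and f[measurable]: "f \<in> borel_measurable S3"
  shows "Pop P f \<in> borel_measurable borel"
proof -
  note integral_measurable_subprob_algebra[measurable]
  note measurable_distr2[measurable]
  have L[measurable]: "P \<in> measurable borel (subprob_algebra S2)"
    using TP unfolding T_transition_def by (rule measurable_prob_algebraD)
  have "(\<lambda>x. integral\<^sup>L (distr (P x) (borel \<Otimes>\<^sub>M S2) (\<lambda>y. (x, y))) f) \<in> borel_measurable borel"
    by measurable
  then show ?thesis unfolding Pop_alt
    by (rule measurable_cong[THEN iffD1, rotated])
       (simp add: integral_distr)
qed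

lemma Qop_measurable:
  assumes TP: "T_transition P" and g[measurable]: "g \<in> borel_measurable borel"
  shows "Qop P g \<in> borel_measurable borel"
proof -
  have L[measurable]: "P \<in> measurable borel (subprob_algebra S2)"
    using TP unfolding T_transition_def by (rule measurable_prob_algebraD)
  have 1: "(\<lambda>x. \<integral>yz. g (fst yz) \<partial>(P x)) \<in> borel_measurable borel"
    by (rule measurable_compose[OF L integral_measurable_subprob_algebra]) measurable
  have 2: "(\<lambda>x. \<integral>yz. g (snd yz) \<partial>(P x)) \<in> borel_measurable borel"
    by (rule measurable_compose[OF L integral_measurable_subprob_algebra]) measurable
  show ?thesis unfolding Qop_def using 1 2 by measurable
qed

lemma bounded_prod:
  assumes "finite I" "\<forall>n\<in>I. \<exists>C. \<forall>x. \<bar>h n x\<bar> \<le> (C::real)"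
  shows "\<exists>C. \<forall>x. \<bar>\<Prod>n\<in>I. h n (g n x)\<bar> \<le> C"
proof -
  from assms(2) obtain C where C: "\<forall>n\<in>I. \<forall>x. \<bar>h n x\<bar> \<le> C n" by metis
  have "\<bar>\<Prod>n\<in>I. h n (g n x)\<bar> \<le> (\<Prod>n\<in>I. C n)" for x
    unfolding abs_prod by (rule prod_mono) (use C in auto)
  then show ?thesis by blast
qed

locale bmcs = prob_space M for M :: "'b measure" +
  fixes X :: "nat \<Rightarrow> 'b \<Rightarrow> 'a::metric_space" and P :: "'a \<Rightarrow> ('a \<times> 'a) measure" and \<nu>
  assumes TP: "T_transition P" and BM: "BMC M X \<nu> P"
begin

lemma Xmeas[measurable]: "X n \<in> borel_measurable M"
  using BM unfolding BMC_def by auto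

lemma Pkernel: "prob_space (P x) \<and> sets (P x) = sets S2"
proof -
  have "P x \<in> space (prob_algebra S2)"
    using TP unfolding T_transition_def by (rule measurable_space) simp
  then show ?thesis unfolding space_prob_algebra by simp
qed

lemma Pprob: "prob_space (P x)" using Pkernel by simp
lemma Psets: "sets (P x) = sets S2" using Pkernel by simp

lemma filtr_sub: "sigma_finite_subalgebra M (nat_filtr M X r)"
proof -
  have sub: "subalgebra M (nat_filtr M X r)"
    unfolding subalgebra_def nat_filtr_def
  proof
    let ?G = "{X i -` B \<inter> space M | i B. i \<in> tree_upto r \<and> B \<in> sets borel}"
    have G: "?G \<subseteq> Pow (space M)" by auto
    have G2: "?G \<subseteq> sets M" by auto
    show "space (sigma (space M) ?G) = space M" using G by simp
    show "sets (sigma (space M) ?G) \<subseteq> sets M"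
      using G G2 by (simp add: sets.sigma_sets_subset)
  qed
  interpret finite_measure_subalgebra M "nat_filtr M X r"
    by unfold_locales (rule sub)
  show ?thesis by unfold_locales
qed

lemma X_filtr_meas: "i \<in> tree_upto r \<Longrightarrow> X i \<in> borel_measurable (nat_filtr M X r)"
proof -
  assume i: "i \<in> tree_upto r"
  let ?G = "{X i -` B \<inter> space M | i B. i \<in> tree_upto r \<and> B \<in> sets borel}"
  have G: "?G \<subseteq> Pow (space M)" by auto
  show ?thesis
    unfolding nat_filtr_def
  proof (rule measurableI)
    fix A :: "'a set" assume A: "A \<in> sets borel"
    have "X i -` A \<inter> space M \<in> ?G" using A i by blast
    then show "X i -` A \<inter> space (sigma (space M) ?G) \<in> sets (sigma (space M) ?G)"
      using G by (simp add: sigma_sets.Basic)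
  qed simp
qed

definition "Dl n \<omega> = (X n \<omega>, X (2*n) \<omega>, X (2*n+1) \<omega>)"

lemma Dl_meas[measurable]: "Dl n \<in> measurable M S3"
  unfolding Dl_def by measurable

lemma BMC_int:
  assumes fs: "\<forall>n\<in>gen r. fs n \<in> bounded_meas S3"
  shows "(\<integral>\<omega>. (\<Prod>n\<in>gen r. fs n (Dl n \<omega>)) \<partial>M) = (\<integral>\<omega>. (\<Prod>n\<in>gen r. Pop P (fs n) (X n \<omega>)) \<partial>M)"
proof -
  interpret S: sigma_finite_subalgebra M "nat_filtr M X r" by (rule filtr_sub)
  have fin: "finite (gen r)" unfolding gen_def by simp
  have fm[measurable]: "\<And>n. n \<in> gen r \<Longrightarrow> fs n \<in> borel_measurable S3"
    using fs unfolding bounded_meas_def by auto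
  have fb: "\<forall>n\<in>gen r. \<exists>C. \<forall>x. \<bar>fs n x\<bar> \<le> C"
    using fs unfolding bounded_meas_def by (simp add: space_pair_measure)
  obtain C where C: "\<And>\<omega>. \<bar>\<Prod>n\<in>gen r. fs n (Dl n \<omega>)\<bar> \<le> C"
    using bounded_prod[OF fin fb, of Dl] by blast
  have m1: "(\<lambda>\<omega>. \<Prod>n\<in>gen r. fs n (Dl n \<omega>)) \<in> borel_measurable M"
    by (rule borel_measurable_prod) (use fm in simp)
  have int1: "integrable M (\<lambda>\<omega>. \<Prod>n\<in>gen r. fs n (Dl n \<omega>))"
    by (rule integrable_const_bound[where B=C]) (use C m1 in auto)
  have pm: "\<And>n. n \<in> gen r \<Longrightarrow> Pop P (fs n) \<in> borel_measurable borel"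
    using Pop_measurable[OF TP] fm by blast
  have m2: "(\<lambda>\<omega>. \<Prod>n\<in>gen r. Pop P (fs n) (X n \<omega>)) \<in> borel_measurable M"
    by (rule borel_measurable_prod) (use pm in simp)
  have AE: "AE \<omega> in M. real_cond_exp M (nat_filtr M X r) (\<lambda>\<omega>. \<Prod>n\<in>gen r. fs n (Dl n \<omega>)) \<omega>
            = (\<Prod>n\<in>gen r. Pop P (fs n) (X n \<omega>))"
    using BM fs unfolding BMC_def Dl_def by blast
  have "(\<integral>\<omega>. (\<Prod>n\<in>gen r. fs n (Dl n \<omega>)) \<partial>M)
     = (\<integral>\<omega>. real_cond_exp M (nat_filtr M X r) (\<lambda>\<omega>. \<Prod>n\<in>gen r. fs n (Dl n \<omega>)) \<omega> \<partial>M)"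
    using S.real_cond_exp_int(2)[OF int1] by simp
  also have "\<dots> = (\<integral>\<omega>. (\<Prod>n\<in>gen r. Pop P (fs n) (X n \<omega>)) \<partial>M)"
    by (rule integral_cong_AE) (use AE m2 in auto)
  finally show ?thesis .
qed

end

lemma prod_two:
  assumes "finite I" "a \<in> I" "b \<in> I" "a \<noteq> b"
  shows "(\<Prod>n\<in>I. (if n = a then u else if n = b then v else (\<lambda>_. 1::real)) (h n)) = u (h a) * v (h b)"
proof -
  have "(\<Prod>n\<in>I. (if n = a then u else if n = b then v else (\<lambda>_. 1::real)) (h n))
      = u (h a) * (\<Prod>n\<in>I-{a}. (if n = a then u else if n = b then v else (\<lambda>_. 1::real)) (h n))"
    using assms by (simp add: prod.remove)
  also have "(\<Prod>n\<in>I-{a}. (if n = a then u else if n = b then v else (\<lambda>_. 1::real)) (h n))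
      = v (h b) * (\<Prod>n\<in>I-{a}-{b}. (if n = a then u else if n = b then v else (\<lambda>_. 1::real)) (h n))"
    using assms by (subst prod.remove[of _ b]) auto
  also have "(\<Prod>n\<in>I-{a}-{b}. (if n = a then u else if n = b then v else (\<lambda>_. 1::real)) (h n)) = 1"
    by (rule prod.neutral) auto
  finally show ?thesis by simp
qed

lemma prod_one:
  assumes "finite I" "a \<in> I"
  shows "(\<Prod>n\<in>I. (if n = a then u else (\<lambda>_. 1::real)) (h n)) = u (h a)"
proof -
  have "(\<Prod>n\<in>I. (if n = a then u else (\<lambda>_. 1::real)) (h n))
      = u (h a) * (\<Prod>n\<in>I-{a}. (if n = a then u else (\<lambda>_. 1::real)) (h n))"
    using assms by (simp add: prod.remove)
  also have "(\<Prod>n\<in>I-{a}. (if n = a then u else (\<lambda>_. 1::real)) (h n)) = 1"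
    by (rule prod.neutral) auto
  finally show ?thesis by simp
qed

lemma finite_gen[simp]: "finite (gen r)" unfolding gen_def by simp
lemma card_gen: "card (gen r) = 2^r" unfolding gen_def by simp

lemma (in prob_space) integrable_bnd:
  fixes f :: "'a \<Rightarrow> real"
  assumes "f \<in> borel_measurable M" "\<And>\<omega>. \<bar>f \<omega>\<bar> \<le> C"
  shows "integrable M f"
  by (rule integrable_const_bound[where B=C]) (use assms in auto)

context bmcs begin

lemma Pop_bound:
  assumes v: "v \<in> borel_measurable S3" "\<And>x. \<bar>v x\<bar> \<le> b"
  shows "\<bar>Pop P v x\<bar> \<le> b"
proof -
  interpret Px: prob_space "P x" by (rule Pprob)
  have m0: "(\<lambda>yz. v (x, yz)) \<in> borel_measurable S2"
    using v(1) by measurable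
  have m: "(\<lambda>yz. v (x, yz)) \<in> borel_measurable (P x)"
    using measurable_cong_sets[OF Psets refl] m0 by blast
  have "\<bar>Pop P v x\<bar> \<le> (\<integral>yz. \<bar>v (x, yz)\<bar> \<partial>(P x))"
    unfolding Pop_alt by (rule integral_abs_bound)
  also have "\<dots> \<le> (\<integral>yz. b \<partial>(P x))"
    by (rule integral_mono) (use m v(2) in \<open>auto intro!: Px.integrable_bnd[where C=b]\<close>)
  also have "\<dots> = b" by (simp add: Px.prob_space)
  finally show ?thesis .
qed

lemma Pop_one: "Pop P (\<lambda>_. 1) x = 1"
proof -
  interpret Px: prob_space "P x" by (rule Pprob)
  show ?thesis unfolding Pop_def by (simp add: Px.prob_space)
qed

lemma one_bm: "(\<lambda>_. 1) \<in> bounded_meas S3" unfolding bounded_meas_def by auto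

lemma BMC_pair:
  assumes ab: "a \<in> gen r" "b \<in> gen r" "a \<noteq> b"
    and uv: "u \<in> bounded_meas S3" "v \<in> bounded_meas S3"
  shows "(\<integral>\<omega>. u (Dl a \<omega>) * v (Dl b \<omega>) \<partial>M) = (\<integral>\<omega>. Pop P u (X a \<omega>) * Pop P v (X b \<omega>) \<partial>M)"
proof -
  define fs where "fs = (\<lambda>n. if n = a then u else if n = b then v else (\<lambda>_. 1::real))"
  have "\<forall>n\<in>gen r. fs n \<in> bounded_meas S3" unfolding fs_def using uv one_bm by auto
  note I = BMC_int[OF this]
  have 1: "(\<Prod>n\<in>gen r. fs n (Dl n \<omega>)) = u (Dl a \<omega>) * v (Dl b \<omega>)" for \<omega>
    unfolding fs_def by (rule prod_two) (use ab in auto)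
  have "(\<Prod>n\<in>gen r. Pop P (fs n) (X n \<omega>)) = 
     (\<Prod>n\<in>gen r. (if n = a then Pop P u else if n = b then Pop P v else (\<lambda>_. 1::real)) (X n \<omega>))" for \<omega>
    by (rule prod.cong) (auto simp: fs_def Pop_one)
  also have "\<dots> \<omega> = Pop P u (X a \<omega>) * Pop P v (X b \<omega>)" for \<omega>
    by (rule prod_two) (use ab in auto)
  finally show ?thesis using I 1 by simp
qed

lemma BMC_single:
  assumes a: "a \<in> gen r" and u: "u \<in> bounded_meas S3"
  shows "(\<integral>\<omega>. u (Dl a \<omega>) \<partial>M) = (\<integral>\<omega>. Pop P u (X a \<omega>) \<partial>M)"
proof -
  define fs where "fs = (\<lambda>n. if n = a then u else (\<lambda>_. 1::real))"
  have "\<forall>n\<in>gen r. fs n \<in> bounded_meas S3" unfolding fs_def using u one_bm by auto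
  note I = BMC_int[OF this]
  have 1: "(\<Prod>n\<in>gen r. fs n (Dl n \<omega>)) = u (Dl a \<omega>)" for \<omega>
    unfolding fs_def by (rule prod_one) (use a in auto)
  have "(\<Prod>n\<in>gen r. Pop P (fs n) (X n \<omega>)) = 
     (\<Prod>n\<in>gen r. (if n = a then Pop P u else (\<lambda>_. 1::real)) (X n \<omega>))" for \<omega>
    by (rule prod.cong) (auto simp: fs_def Pop_one)
  also have "\<dots> \<omega> = Pop P u (X a \<omega>)" for \<omega>
    by (rule prod_one) (use a in auto)
  finally show ?thesis using I 1 by simp
qed

end

context prob_space begin
lemma int_sq_sum:
  fixes F :: "'i \<Rightarrow> 'a \<Rightarrow> real"
  assumes I: "finite I" and m: "\<And>i. i \<in> I \<Longrightarrow> F i \<in> borel_measurable M"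
    and bd: "\<And>i. i \<in> I \<Longrightarrow> \<exists>C. \<forall>\<omega>. \<bar>F i \<omega>\<bar> \<le> C"
  shows "(\<integral>\<omega>. (\<Sum>i\<in>I. F i \<omega>)\<^sup>2 \<partial>M) = (\<Sum>i\<in>I. \<Sum>j\<in>I. \<integral>\<omega>. F i \<omega> * F j \<omega> \<partial>M)"
proof -
  obtain C where C: "\<And>i \<omega>. i \<in> I \<Longrightarrow> \<bar>F i \<omega>\<bar> \<le> C i" using bd by metis
  have int: "integrable M (\<lambda>\<omega>. F i \<omega> * F j \<omega>)" if "i \<in> I" "j \<in> I" for i j
  proof (rule integrable_bnd[where C="C i * C j"])
    show "(\<lambda>\<omega>. F i \<omega> * F j \<omega>) \<in> borel_measurable M" using m that by simp
    show "\<bar>F i \<omega> * F j \<omega>\<bar> \<le> C i * C j" for \<omega>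
      unfolding abs_mult by (rule mult_mono) (use C that in \<open>auto intro: order_trans[OF abs_ge_zero]\<close>)
  qed
  have "(\<lambda>\<omega>. (\<Sum>i\<in>I. F i \<omega>)\<^sup>2) = (\<lambda>\<omega>. \<Sum>i\<in>I. \<Sum>j\<in>I. F i \<omega> * F j \<omega>)"
    by (simp add: power2_eq_square sum_product)
  then have "(\<integral>\<omega>. (\<Sum>i\<in>I. F i \<omega>)\<^sup>2 \<partial>M) = (\<integral>\<omega>. (\<Sum>i\<in>I. \<Sum>j\<in>I. F i \<omega> * F j \<omega>) \<partial>M)" by simp
  also have "\<dots> = (\<Sum>i\<in>I. \<integral>\<omega>. (\<Sum>j\<in>I. F i \<omega> * F j \<omega>) \<partial>M)"
    by (rule Bochner_Integration.integral_sum[where f="\<lambda>i \<omega>. \<Sum>j\<in>I. F i \<omega> * F j \<omega>"]) (auto intro!: integrable_sum int)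
  also have "\<dots> = (\<Sum>i\<in>I. \<Sum>j\<in>I. \<integral>\<omega>. F i \<omega> * F j \<omega> \<partial>M)"
    by (rule sum.cong[OF refl], rule Bochner_Integration.integral_sum) (auto intro!: integrable_sum int)
  finally show ?thesis .
qed
end

context bmcs begin

lemma Lsq:
  assumes vm[measurable]: "v \<in> borel_measurable S3" and vb: "\<And>x. \<bar>v x\<bar> \<le> b"
  shows "(\<integral>\<omega>. (\<Sum>l\<in>gen q. v (Dl l \<omega>))\<^sup>2 \<partial>M) \<le> 2^q * b\<^sup>2 + (\<integral>\<omega>. (\<Sum>l\<in>gen q. Pop P v (X l \<omega>))\<^sup>2 \<partial>M)"
proof -
  have vbm: "v \<in> bounded_meas S3" unfolding bounded_meas_def using vb vm by blast
  have pm[measurable]: "Pop P v \<in> borel_measurable borel" by (rule Pop_measurable[OF TP vm])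
  have pb: "\<And>x. \<bar>Pop P v x\<bar> \<le> b" by (rule Pop_bound[OF vm vb])
  have e1: "(\<integral>\<omega>. (\<Sum>l\<in>gen q. v (Dl l \<omega>))\<^sup>2 \<partial>M) = (\<Sum>i\<in>gen q. \<Sum>j\<in>gen q. \<integral>\<omega>. v (Dl i \<omega>) * v (Dl j \<omega>) \<partial>M)"
    apply (rule int_sq_sum) apply simp apply measurable using vb by blast
  have e2: "(\<integral>\<omega>. (\<Sum>l\<in>gen q. Pop P v (X l \<omega>))\<^sup>2 \<partial>M) = (\<Sum>i\<in>gen q. \<Sum>j\<in>gen q. \<integral>\<omega>. Pop P v (X i \<omega>) * Pop P v (X j \<omega>) \<partial>M)"
    apply (rule int_sq_sum) apply simp apply measurable using pb by blast
  have key: "(\<integral>\<omega>. v (Dl i \<omega>) * v (Dl j \<omega>) \<partial>M) \<le> (\<integral>\<omega>. Pop P v (X i \<omega>) * Pop P v (X j \<omega>) \<partial>M) + (if i = j then b\<^sup>2 else 0)"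
    if ij: "i \<in> gen q" "j \<in> gen q" for i j
  proof (cases "i = j")
    case False
    then show ?thesis using BMC_pair[OF ij False vbm vbm] by simp
  next
    case True
    have "(\<integral>\<omega>. v (Dl i \<omega>) * v (Dl j \<omega>) \<partial>M) \<le> (\<integral>\<omega>. b\<^sup>2 \<partial>M)"
    proof (rule integral_mono)
      show "integrable M (\<lambda>\<omega>. v (Dl i \<omega>) * v (Dl j \<omega>))"
        by (rule integrable_bnd[where C="b*b"]) (auto simp: abs_mult intro!: mult_mono vb order_trans[OF abs_ge_zero vb])
      show "v (Dl i \<omega>) * v (Dl j \<omega>) \<le> b\<^sup>2" for \<omega>
        using True abs_le_square_iff[of "v (Dl j \<omega>)" b] vb[of "Dl j \<omega>"]
        by (simp add: power2_eq_square[symmetric])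
    qed simp
    also have "\<dots> = b\<^sup>2" by (simp add: prob_space)
    finally have 1: "(\<integral>\<omega>. v (Dl i \<omega>) * v (Dl j \<omega>) \<partial>M) \<le> b\<^sup>2" .
    have z: "0 \<le> (\<integral>\<omega>. Pop P v (X i \<omega>) * Pop P v (X j \<omega>) \<partial>M)"
      using True by (auto intro!: integral_nonneg_AE)
    have "(\<integral>\<omega>. v (Dl i \<omega>) * v (Dl j \<omega>) \<partial>M) \<le> (\<integral>\<omega>. Pop P v (X i \<omega>) * Pop P v (X j \<omega>) \<partial>M) + b\<^sup>2"
      using 1 z by linarith
    then show ?thesis using True by simp
  qed
  have "(\<Sum>i\<in>gen q. \<Sum>j\<in>gen q. \<integral>\<omega>. v (Dl i \<omega>) * v (Dl j \<omega>) \<partial>M)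
     \<le> (\<Sum>i\<in>gen q. \<Sum>j\<in>gen q. (\<integral>\<omega>. Pop P v (X i \<omega>) * Pop P v (X j \<omega>) \<partial>M) + (if i = j then b\<^sup>2 else 0))"
    by (intro sum_mono key) auto
  also have "\<dots> = (\<integral>\<omega>. (\<Sum>l\<in>gen q. Pop P v (X l \<omega>))\<^sup>2 \<partial>M) + 2^q * b\<^sup>2"
    by (simp add: e2 sum.distrib card_gen)
  finally show ?thesis using e1 by simp
qed

end

lemma sum_reindex2:
  "(\<Sum>a\<in>{2*A..<2*(A+k)}. h a) = (\<Sum>l\<in>{A..<A+k}. h (2*l) + h (2*l+1::nat))"
proof (induction k)
  case 0 then show ?case by simp
next
  case (Suc k)
  have "{2*A..<2*(A+Suc k)} = {2*A..<2*(A+k)} \<union> {2*(A+k), 2*(A+k)+1}" by auto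
  then have "(\<Sum>a\<in>{2*A..<2*(A+Suc k)}. h a) = (\<Sum>a\<in>{2*A..<2*(A+k)}. h a) + (h (2*(A+k)) + h (2*(A+k)+1))"
    by (simp add: sum.union_disjoint add_ac)
  also have "\<dots> = (\<Sum>l\<in>{A..<A+k}. h (2*l) + h (2*l+1)) + (h (2*(A+k)) + h (2*(A+k)+1))"
    using Suc by simp
  also have "\<dots> = (\<Sum>l\<in>{A..<A+Suc k}. h (2*l) + h (2*l+1))" by simp
  finally show ?case .
qed

lemma sum_gen_Suc: "(\<Sum>a\<in>gen (Suc q). h a) = (\<Sum>l\<in>gen q. h (2*l) + h (2*l+1))"
proof -
  have "gen (Suc q) = {2*2^q..<2*(2^q + 2^q)}" unfolding gen_def by simp
  moreover have "gen q = {2^q..<2^q+2^q}" unfolding gen_def by (simp add: mult_2)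
  ultimately show ?thesis using sum_reindex2[of h "2^q" "2^q"] by (simp add: mult_2)
qed

lemma sq_le: "\<bar>x::real\<bar> \<le> B \<Longrightarrow> x\<^sup>2 \<le> B\<^sup>2"
  using power_mono[of "\<bar>x\<bar>" B 2] by simp

context bmcs begin

lemma Pop_split:
  assumes um[measurable]: "u \<in> borel_measurable borel" and ub: "\<And>x. \<bar>u x\<bar> \<le> b"
  shows "Pop P (\<lambda>(x,y,z). u y + u z) x = 2 * Qop P u x"
proof -
  interpret Px: prob_space "P x" by (rule Pprob)
  have m1: "(\<lambda>yz. u (fst yz)) \<in> borel_measurable (P x)"
    using measurable_cong_sets[OF Psets refl] by (metis measurable_compose[OF measurable_fst um])
  have m2: "(\<lambda>yz. u (snd yz)) \<in> borel_measurable (P x)"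
    using measurable_cong_sets[OF Psets refl] by (metis measurable_compose[OF measurable_snd um])
  have i1: "integrable (P x) (\<lambda>yz. u (fst yz))" by (rule Px.integrable_bnd[OF m1 ub])
  have i2: "integrable (P x) (\<lambda>yz. u (snd yz))" by (rule Px.integrable_bnd[OF m2 ub])
  show ?thesis unfolding Pop_def Qop_def
    using Bochner_Integration.integral_add[OF i1 i2] by (simp add: split_beta)
qed

lemma Rec:
  assumes um[measurable]: "u \<in> borel_measurable borel" and ub: "\<And>x. \<bar>u x\<bar> \<le> b"
  shows "(\<integral>\<omega>. (\<Sum>a\<in>gen (Suc q). u (X a \<omega>))\<^sup>2 \<partial>M)
     \<le> 2^q * (2*b)\<^sup>2 + 4 * (\<integral>\<omega>. (\<Sum>l\<in>gen q. Qop P u (X l \<omega>))\<^sup>2 \<partial>M)"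
proof -
  define v where "v = (\<lambda>(x::'a,y::'a,z::'a). u y + u z)"
  have vm[measurable]: "v \<in> borel_measurable S3" unfolding v_def by measurable
  have vb: "\<bar>v x\<bar> \<le> 2*b" for x
  proof -
    obtain a y z where x: "x = (a,y,z)" by (cases x) auto
    have "\<bar>u y + u z\<bar> \<le> \<bar>u y\<bar> + \<bar>u z\<bar>" by (rule abs_triangle_ineq)
    then show ?thesis unfolding v_def x using ub[of y] ub[of z] by simp
  qed
  have 1: "(\<Sum>a\<in>gen (Suc q). u (X a \<omega>)) = (\<Sum>l\<in>gen q. v (Dl l \<omega>))" for \<omega>
    unfolding sum_gen_Suc v_def Dl_def by simp
  have 2: "(\<Sum>l\<in>gen q. Pop P v (X l \<omega>))\<^sup>2 = 4 * (\<Sum>l\<in>gen q. Qop P u (X l \<omega>))\<^sup>2" for \<omega>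
    unfolding v_def Pop_split[OF um ub] by (simp add: sum_distrib_left[symmetric] power_mult_distrib)
  show ?thesis using Lsq[OF vm vb, of q] unfolding 1 2 by simp
qed

end

locale bmcg = bmcs M X P \<nu> for M :: "'b measure" and X :: "nat \<Rightarrow> 'b \<Rightarrow> 'a::metric_space" and P \<nu> +
  fixes g :: "'a \<Rightarrow> real" and c \<alpha> :: real
  assumes gm[measurable]: "g \<in> borel_measurable borel"
    and gb: "\<And>j x. \<bar>(Qop P ^^ j) g x\<bar> \<le> c * \<alpha>^j"
    and \<alpha>: "0 < \<alpha>" "\<alpha> < 1" and cpos: "0 < c"
begin

definition "\<gamma> = (1 + \<alpha>\<^sup>2) / 2"
definition "Ac = 2 / (1 - \<alpha>\<^sup>2)"

lemma Qj_meas[measurable]: "(Qop P ^^ j) g \<in> borel_measurable borel"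
  by (induction j) (auto intro: Qop_measurable[OF TP])

lemma \<gamma>_props: "1/2 \<le> \<gamma>" "\<gamma> < 1" "0 < \<gamma>"
proof -
  have "\<alpha>\<^sup>2 < 1" using \<alpha> by (simp add: power_less_one_iff)
  moreover have "0 \<le> \<alpha>\<^sup>2" by simp
  ultimately show "1/2 \<le> \<gamma>" "\<gamma> < 1" "0 < \<gamma>" unfolding \<gamma>_def by (auto simp: add_pos_nonneg)
qed

lemma Ac_props: "1 \<le> Ac" "Ac * (\<gamma> - \<alpha>\<^sup>2) = 1"
proof -
  have a: "\<alpha>\<^sup>2 < 1" using \<alpha> by (simp add: power_less_one_iff)
  then show "1 \<le> Ac" unfolding Ac_def using \<alpha> by (simp add: field_simps)
  show "Ac * (\<gamma> - \<alpha>\<^sup>2) = 1" unfolding Ac_def \<gamma>_def using a by (simp add: field_simps)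
qed

lemma gen0: "gen 0 = {1}" unfolding gen_def by auto

lemma gen_bound:
  "(\<integral>\<omega>. (\<Sum>a\<in>gen q. (Qop P ^^ j) g (X a \<omega>))\<^sup>2 \<partial>M) \<le> c\<^sup>2 * \<alpha>^(2*j) * Ac * (4*\<gamma>)^q"
proof (induction q arbitrary: j)
  case 0
  have "(\<integral>\<omega>. (\<Sum>a\<in>gen 0. (Qop P ^^ j) g (X a \<omega>))\<^sup>2 \<partial>M) = (\<integral>\<omega>. ((Qop P ^^ j) g (X 1 \<omega>))\<^sup>2 \<partial>M)"
    by (simp add: gen0)
  also have "\<dots> \<le> (\<integral>\<omega>. (c * \<alpha>^j)\<^sup>2 \<partial>M)"
  proof (rule integral_mono)
    show "integrable M (\<lambda>\<omega>. ((Qop P ^^ j) g (X 1 \<omega>))\<^sup>2)"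
      by (rule integrable_bnd[where C="(c*\<alpha>^j)\<^sup>2"]) (use sq_le[OF gb] in auto)
    show "((Qop P ^^ j) g (X 1 \<omega>))\<^sup>2 \<le> (c * \<alpha>^j)\<^sup>2" for \<omega>
      using sq_le[OF gb] by simp
  qed simp
  also have "\<dots> = c\<^sup>2 * \<alpha>^(2*j)"
    using power_mult[of \<alpha> j 2] by (simp add: prob_space power_mult_distrib mult.commute)
  also have "\<dots> \<le> c\<^sup>2 * \<alpha>^(2*j) * Ac * (4*\<gamma>)^0"
    using mult_left_mono[OF Ac_props(1), of "c\<^sup>2 * \<alpha>^(2*j)"] by simp
  finally show ?case .
next
  case (Suc q)
  have "(\<integral>\<omega>. (\<Sum>a\<in>gen (Suc q). (Qop P ^^ j) g (X a \<omega>))\<^sup>2 \<partial>M)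
     \<le> 2^q * (2*(c*\<alpha>^j))\<^sup>2 + 4 * (\<integral>\<omega>. (\<Sum>l\<in>gen q. Qop P ((Qop P ^^ j) g) (X l \<omega>))\<^sup>2 \<partial>M)"
    by (rule Rec[OF Qj_meas gb])
  also have "(\<integral>\<omega>. (\<Sum>l\<in>gen q. Qop P ((Qop P ^^ j) g) (X l \<omega>))\<^sup>2 \<partial>M)
       = (\<integral>\<omega>. (\<Sum>l\<in>gen q. (Qop P ^^ Suc j) g (X l \<omega>))\<^sup>2 \<partial>M)" by simp
  also have "\<dots> \<le> c\<^sup>2 * \<alpha>^(2*Suc j) * Ac * (4*\<gamma>)^q" by (rule Suc.IH)
  finally have 1: "(\<integral>\<omega>. (\<Sum>a\<in>gen (Suc q). (Qop P ^^ j) g (X a \<omega>))\<^sup>2 \<partial>M)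
     \<le> 2^q * (2*(c*\<alpha>^j))\<^sup>2 + 4 * (c\<^sup>2 * \<alpha>^(2*Suc j) * Ac * (4*\<gamma>)^q)" by simp
  define K where "K = c\<^sup>2 * \<alpha>^(2*j)"
  have K0: "0 \<le> K" unfolding K_def by simp
  have e1: "2^q * (2*(c*\<alpha>^j))\<^sup>2 = K * (4 * 2^q)"
    unfolding K_def by (simp add: power_mult_distrib power_mult[symmetric] mult.commute)
  have e2: "4 * (c\<^sup>2 * \<alpha>^(2*Suc j) * Ac * (4*\<gamma>)^q) = K * (4 * \<alpha>\<^sup>2 * Ac * (4*\<gamma>)^q)"
  proof -
    have "\<alpha>^(2*Suc j) = \<alpha>^(2*j) * \<alpha>\<^sup>2" by (simp add: power_add power2_eq_square)
    then show ?thesis unfolding K_def by (simp add: mult_ac)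
  qed
  have "(2::real)^q \<le> (4*\<gamma>)^q" using \<gamma>_props by (intro power_mono) auto
  then have "4 * 2^q + 4 * \<alpha>\<^sup>2 * Ac * (4*\<gamma>)^q \<le> 4 * (4*\<gamma>)^q + 4 * \<alpha>\<^sup>2 * Ac * (4*\<gamma>)^q" by simp
  also have "\<dots> = 4 * (4*\<gamma>)^q * (1 + \<alpha>\<^sup>2 * Ac)" by (simp add: algebra_simps)
  also have "1 + \<alpha>\<^sup>2 * Ac = Ac * \<gamma>" using Ac_props(2) by (simp add: algebra_simps)
  also have "4 * (4*\<gamma>)^q * (Ac * \<gamma>) = 4 * \<gamma> * Ac * (4*\<gamma>)^q" by (simp add: mult_ac)
  finally have 2: "4 * 2^q + 4 * \<alpha>\<^sup>2 * Ac * (4*\<gamma>)^q \<le> Ac * (4*\<gamma>)^Suc q" by (simp add: mult_ac)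
  have "2^q * (2*(c*\<alpha>^j))\<^sup>2 + 4 * (c\<^sup>2 * \<alpha>^(2*Suc j) * Ac * (4*\<gamma>)^q) = K * (4 * 2^q + 4 * \<alpha>\<^sup>2 * Ac * (4*\<gamma>)^q)"
    unfolding e1 e2 by (simp add: algebra_simps)
  also have "\<dots> \<le> K * (Ac * (4*\<gamma>)^Suc q)" by (rule mult_left_mono[OF 2 K0])
  also have "\<dots> = c\<^sup>2 * \<alpha>^(2*j) * Ac * (4*\<gamma>)^Suc q" unfolding K_def by (simp add: mult_ac)
  finally show ?case using 1 by linarith
qed

end

definition sw :: "nat \<Rightarrow> nat \<Rightarrow> nat \<Rightarrow> nat" where
  "sw x y z = (if z = x then y else if z = y then x else z)"

lemma sw_sw[simp]: "sw x y (sw x y z) = z" unfolding sw_def by auto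

lemma gen_disj: "a \<in> gen q \<Longrightarrow> a \<in> gen r \<Longrightarrow> q = r"
proof (rule ccontr)
  assume a: "a \<in> gen q" "a \<in> gen r" "q \<noteq> r"
  { fix q r :: nat assume "a \<in> gen q" "a \<in> gen r" "q < r"
    then have "a < 2^(q+1)" "2^r \<le> a" unfolding gen_def by auto
    moreover have "(2::nat)^(q+1) \<le> 2^r" using \<open>q < r\<close> by (intro power_increasing) auto
    ultimately have False by simp }
  then show False using a by (metis linorder_neqE_nat)
qed

lemma sw_gen_perm:
  assumes "x \<in> gen q" "y \<in> gen q"
  shows "gen_perm (sw x y)"
  unfolding gen_perm_def
proof
  fix r
  have into: "sw x y z \<in> gen r" if "z \<in> gen r" for z
  proof (cases "r = q")
    case True then show ?thesis using assms that unfolding sw_def by auto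
  next
    case False
    then have "x \<notin> gen r" "y \<notin> gen r" using assms gen_disj by blast+
    then show ?thesis using that unfolding sw_def by auto
  qed
  show "bij_betw (sw x y) (gen r) (gen r)"
    by (rule bij_betwI[where g="sw x y"]) (use into in auto)
qed

lemma gen_perm_into: "gen_perm \<sigma> \<Longrightarrow> i \<in> gen q \<Longrightarrow> \<sigma> i \<in> gen q"
  unfolding gen_perm_def bij_betw_def by auto

lemma gen_perm_inj: "gen_perm \<sigma> \<Longrightarrow> i \<in> gen q \<Longrightarrow> j \<in> gen q \<Longrightarrow> i \<noteq> j \<Longrightarrow> \<sigma> i \<noteq> \<sigma> j"
  unfolding gen_perm_def bij_betw_def inj_on_def by metis

lemma tree_upto_into: "gen_perm \<sigma> \<Longrightarrow> i \<in> tree_upto r \<Longrightarrow> \<sigma> i \<in> tree_upto r"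
  unfolding tree_upto_def using gen_perm_into by blast

lemma finite_tree_upto: "finite (tree_upto r)" unfolding tree_upto_def by simp

lemma gen_sub_tree: "q \<le> r \<Longrightarrow> gen q \<subseteq> tree_upto r" unfolding tree_upto_def by auto

lemma gen_perm_comp: "gen_perm \<rho> \<Longrightarrow> gen_perm \<sigma> \<Longrightarrow> gen_perm (\<rho> \<circ> \<sigma>)"
  unfolding gen_perm_def using bij_betw_trans by blast

definition Rset :: "nat \<Rightarrow> (nat \<Rightarrow> nat) set" where
  "Rset r = (\<lambda>\<sigma>. restrict \<sigma> (tree_upto r)) ` {\<sigma>. gen_perm \<sigma>}"

definition Aset :: "nat \<Rightarrow> nat \<Rightarrow> nat \<Rightarrow> nat \<Rightarrow> nat \<Rightarrow> (nat \<Rightarrow> nat) set" where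
  "Aset r i j a b = {\<tau>\<in>Rset r. \<tau> i = a \<and> \<tau> j = b}"

lemma finite_Rset: "finite (Rset r)"
proof -
  have "Rset r \<subseteq> PiE (tree_upto r) (\<lambda>_. tree_upto r)"
    unfolding Rset_def using tree_upto_into by auto
  then show ?thesis using finite_PiE[OF finite_tree_upto, of r "\<lambda>_. tree_upto r"] finite_tree_upto
    by (meson finite_subset)
qed

lemma card_Aset_sw_le:
  assumes xy: "x \<in> gen q" "y \<in> gen q" and ij: "i \<in> tree_upto r" "j \<in> tree_upto r"
  shows "card (Aset r i j a b) \<le> card (Aset r i j (sw x y a) (sw x y b))"
proof -
  let ?f = "\<lambda>\<tau>. restrict (sw x y \<circ> \<tau>) (tree_upto r)"
  have inj: "inj_on ?f (Aset r i j a b)"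
  proof (rule inj_onI)
    fix \<tau> \<tau>' assume t: "\<tau> \<in> Aset r i j a b" "\<tau>' \<in> Aset r i j a b" and e: "?f \<tau> = ?f \<tau>'"
    from t obtain \<sigma> \<sigma>' where s: "\<tau> = restrict \<sigma> (tree_upto r)" "\<tau>' = restrict \<sigma>' (tree_upto r)"
      unfolding Aset_def Rset_def by auto
    show "\<tau> = \<tau>'"
    proof
      fix k show "\<tau> k = \<tau>' k"
      proof (cases "k \<in> tree_upto r")
        case True
        then have "sw x y (\<tau> k) = sw x y (\<tau>' k)" using fun_cong[OF e, of k] by simp
        then show ?thesis by (metis sw_sw)
      next
        case False then show ?thesis using s by simp
      qed
    qed
  qed
  have img: "?f ` Aset r i j a b \<subseteq> Aset r i j (sw x y a) (sw x y b)"
  proof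
    fix t assume "t \<in> ?f ` Aset r i j a b"
    then obtain \<tau> where t: "t = ?f \<tau>" "\<tau> \<in> Aset r i j a b" by auto
    then obtain \<sigma> where s: "\<tau> = restrict \<sigma> (tree_upto r)" "gen_perm \<sigma>"
      unfolding Aset_def Rset_def by auto
    have "t = restrict (sw x y \<circ> \<sigma>) (tree_upto r)" using t(1) s(1) by auto
    moreover have "gen_perm (sw x y \<circ> \<sigma>)" by (rule gen_perm_comp[OF sw_gen_perm[OF xy] s(2)])
    ultimately have "t \<in> Rset r" unfolding Rset_def by auto
    moreover have "t i = sw x y a" "t j = sw x y b" using t ij unfolding Aset_def by auto
    ultimately show "t \<in> Aset r i j (sw x y a) (sw x y b)" unfolding Aset_def by auto
  qed
  have fin: "finite (Aset r i j (sw x y a) (sw x y b))"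
    using finite_Rset unfolding Aset_def by simp
  show ?thesis by (rule card_inj_on_le[OF inj img fin])
qed

lemma card_Aset_sw:
  assumes xy: "x \<in> gen q" "y \<in> gen q" and ij: "i \<in> tree_upto r" "j \<in> tree_upto r"
  shows "card (Aset r i j a b) = card (Aset r i j (sw x y a) (sw x y b))"
  using card_Aset_sw_le[OF xy ij, of a b] card_Aset_sw_le[OF xy ij, of "sw x y a" "sw x y b"]
  by simp

lemma card_Aset_eq:
  assumes ij: "i \<in> tree_upto r" "j \<in> tree_upto r"
    and ab: "a \<in> gen q" "b \<in> gen q" "a \<noteq> b" and ab0: "a0 \<in> gen q" "b0 \<in> gen q" "a0 \<noteq> b0"
  shows "card (Aset r i j a b) = card (Aset r i j a0 b0)"
proof (cases "b0 = a")
  case False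
  have 1: "card (Aset r i j a b) = card (Aset r i j a b0)"
    using card_Aset_sw[OF ab(2) ab0(2) ij, of a b] False ab(3) by (simp add: sw_def)
  have 2: "card (Aset r i j a b0) = card (Aset r i j a0 b0)"
    using card_Aset_sw[OF ab(1) ab0(1) ij, of a b0] False ab0(3) by (simp add: sw_def)
  show ?thesis using 1 2 by simp
next
  case True
  show ?thesis
  proof (cases "a0 = b")
    case False
    have 1: "card (Aset r i j a b) = card (Aset r i j a0 b)"
      using card_Aset_sw[OF ab(1) ab0(1) ij, of a b] False ab(3) by (simp add: sw_def)
    have 2: "card (Aset r i j a0 b) = card (Aset r i j a0 b0)"
      using card_Aset_sw[OF ab(2) ab0(2) ij, of a0 b] False ab0(3) by (simp add: sw_def)
    show ?thesis using 1 2 by simp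
  next
    case a0: True
    show ?thesis
      using card_Aset_sw[OF ab(1) ab(2) ij, of a b] True a0 ab(3) by (simp add: sw_def)
  qed
qed


locale bmcp = bmcs M X P \<nu> for M :: "'b measure" and X :: "nat \<Rightarrow> 'b \<Rightarrow> 'a::metric_space" and P \<nu> +
  fixes \<pi> :: "'b \<Rightarrow> nat \<Rightarrow> nat"
  assumes U: "uniform_gen_perm M \<pi> X"
begin

lemma pi_perm: "\<omega> \<in> space M \<Longrightarrow> gen_perm (\<pi> \<omega>)" using U unfolding uniform_gen_perm_def by auto

lemma pi_meas[measurable]: "(\<lambda>\<omega>. \<pi> \<omega> i) \<in> measurable M (count_space UNIV)"
  using U unfolding uniform_gen_perm_def by auto

definition "Xv \<omega> = (\<lambda>n. X n \<omega>)"

lemma Xv_meas[measurable]: "Xv \<in> measurable M (Pi\<^sub>M UNIV (\<lambda>_. borel))"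
  unfolding Xv_def by (rule measurable_PiM_single') auto

lemma pi_meas2[measurable]: "\<pi> \<in> measurable M (Pi\<^sub>M UNIV (\<lambda>_. count_space UNIV))"
proof -
  have "(\<lambda>\<omega> i. \<pi> \<omega> i) \<in> measurable M (Pi\<^sub>M UNIV (\<lambda>_. count_space UNIV))"
    by (rule measurable_PiM_single') auto
  then show ?thesis by simp
qed

lemma indep_int:
  fixes g1 :: "(nat \<Rightarrow> nat) \<Rightarrow> real" and h :: "(nat \<Rightarrow> 'a) \<Rightarrow> real"
  assumes g1[measurable]: "g1 \<in> borel_measurable (Pi\<^sub>M UNIV (\<lambda>_. count_space UNIV))" and g1b: "\<And>s. \<bar>g1 s\<bar> \<le> C1"
    and h[measurable]: "h \<in> borel_measurable (Pi\<^sub>M UNIV (\<lambda>_. borel))" and hb: "\<And>x. \<bar>h x\<bar> \<le> C2"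
  shows "(\<integral>\<omega>. g1 (\<pi> \<omega>) * h (Xv \<omega>) \<partial>M) = (\<integral>\<omega>. g1 (\<pi> \<omega>) \<partial>M) * (\<integral>\<omega>. h (Xv \<omega>) \<partial>M)"
proof -
  let ?C1 = "{\<pi> -` B \<inter> space M | B. B \<in> sets (Pi\<^sub>M UNIV (\<lambda>_. count_space UNIV))}"
  let ?C2 = "{Xv -` B \<inter> space M | B. B \<in> sets (Pi\<^sub>M UNIV (\<lambda>_. borel))}"
  have I: "indep_set ?C1 ?C2"
    using U unfolding uniform_gen_perm_def Xv_def by auto
  have iv: "indep_var borel (g1 \<circ> \<pi>) borel (h \<circ> Xv)"
    unfolding indep_var_def indep_vars_def2
  proof
    show "\<forall>i\<in>UNIV. random_variable (case_bool borel borel i) (case_bool (g1 \<circ> \<pi>) (h \<circ> Xv) i)"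
      by (auto split: bool.split)
    show "indep_sets (\<lambda>i. {case_bool (g1 \<circ> \<pi>) (h \<circ> Xv) i -` A \<inter> space M |A.
             A \<in> sets (case_bool borel borel i)}) UNIV"
    proof (rule indep_sets_mono_sets[OF I[unfolded indep_set_def]])
      fix i :: bool
      show "{case_bool (g1 \<circ> \<pi>) (h \<circ> Xv) i -` A \<inter> space M |A. A \<in> sets (case_bool borel borel i)}
          \<subseteq> case_bool ?C1 ?C2 i"
      proof (cases i)
        case True
        { fix A :: "real set" assume A: "A \<in> sets borel"
          have "(g1 \<circ> \<pi>) -` A \<inter> space M = \<pi> -` (g1 -` A \<inter> space (Pi\<^sub>M UNIV (\<lambda>_. count_space UNIV))) \<inter> space M"
            using measurable_space[OF pi_meas2] by auto
          moreover have "g1 -` A \<inter> space (Pi\<^sub>M UNIV (\<lambda>_. count_space UNIV)) \<in> sets (Pi\<^sub>M UNIV (\<lambda>_. count_space UNIV))"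
            using A by measurable
          ultimately have "(g1 \<circ> \<pi>) -` A \<inter> space M \<in> ?C1" by blast }
        then show ?thesis using True by auto
      next
        case False
        { fix A :: "real set" assume A: "A \<in> sets borel"
          have "(h \<circ> Xv) -` A \<inter> space M = Xv -` (h -` A \<inter> space (Pi\<^sub>M UNIV (\<lambda>_. borel))) \<inter> space M"
            using measurable_space[OF Xv_meas] by auto
          moreover have "h -` A \<inter> space (Pi\<^sub>M UNIV (\<lambda>_. borel)) \<in> sets (Pi\<^sub>M UNIV (\<lambda>_. borel))"
            using A by measurable
          ultimately have "(h \<circ> Xv) -` A \<inter> space M \<in> ?C2" by blast }
        then show ?thesis using False by auto
      qed
    qed
  qed
  moreover have "integrable M (g1 \<circ> \<pi>)" by (rule integrable_bnd[where C=C1]) (use g1b in auto)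
  moreover have "integrable M (h \<circ> Xv)" by (rule integrable_bnd[where C=C2]) (use hb in auto)
  ultimately show ?thesis using indep_var_lebesgue_integral by (simp add: comp_def)
qed

definition "Pi_r r = (\<Prod>q\<le>r. fact (2^q) :: real)"

lemma ev_sets: "{\<omega>\<in>space M. \<forall>k\<in>tree_upto r. \<pi> \<omega> k = \<sigma> k} \<in> sets M"
proof -
  have "Measurable.pred M (\<lambda>\<omega>. \<forall>k\<in>tree_upto r. \<pi> \<omega> k = \<sigma> k)"
    using finite_tree_upto by measurable
  then show ?thesis by (simp add: pred_def)
qed

lemma ev_restrict: "{\<omega>\<in>space M. restrict (\<pi> \<omega>) (tree_upto r) = restrict \<sigma> (tree_upto r)}
   = {\<omega>\<in>space M. \<forall>k\<in>tree_upto r. \<pi> \<omega> k = \<sigma> k}"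
  by (force simp: fun_eq_iff restrict_def)

lemma prob_restrict:
  assumes "\<tau> \<in> Rset r"
  shows "{\<omega>\<in>space M. restrict (\<pi> \<omega>) (tree_upto r) = \<tau>} \<in> sets M"
    "prob {\<omega>\<in>space M. restrict (\<pi> \<omega>) (tree_upto r) = \<tau>} = 1 / Pi_r r"
proof -
  obtain \<sigma> where s: "\<tau> = restrict \<sigma> (tree_upto r)" "gen_perm \<sigma>" using assms unfolding Rset_def by auto
  show "{\<omega>\<in>space M. restrict (\<pi> \<omega>) (tree_upto r) = \<tau>} \<in> sets M"
    unfolding s ev_restrict by (rule ev_sets)
  show "prob {\<omega>\<in>space M. restrict (\<pi> \<omega>) (tree_upto r) = \<tau>} = 1 / Pi_r r"
    unfolding s ev_restrict using U s(2) unfolding uniform_gen_perm_def Pi_r_def by auto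
qed

lemma prob_pair_card:
  assumes ij: "i \<in> tree_upto r" "j \<in> tree_upto r"
  shows "prob {\<omega>\<in>space M. \<pi> \<omega> i = a \<and> \<pi> \<omega> j = b} = card (Aset r i j a b) / Pi_r r"
proof -
  let ?E = "\<lambda>\<tau>. {\<omega>\<in>space M. restrict (\<pi> \<omega>) (tree_upto r) = \<tau>}"
  have eq: "{\<omega>\<in>space M. \<pi> \<omega> i = a \<and> \<pi> \<omega> j = b} = (\<Union>\<tau>\<in>Aset r i j a b. ?E \<tau>)"
  proof (intro set_eqI iffI)
    fix \<omega> assume "\<omega> \<in> {\<omega>\<in>space M. \<pi> \<omega> i = a \<and> \<pi> \<omega> j = b}"
    then have w: "\<omega> \<in> space M" "\<pi> \<omega> i = a" "\<pi> \<omega> j = b" by auto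
    have "restrict (\<pi> \<omega>) (tree_upto r) \<in> Aset r i j a b"
      using w ij pi_perm[OF w(1)] unfolding Aset_def Rset_def by auto
    then show "\<omega> \<in> (\<Union>\<tau>\<in>Aset r i j a b. ?E \<tau>)" using w by auto
  next
    fix \<omega> assume "\<omega> \<in> (\<Union>\<tau>\<in>Aset r i j a b. ?E \<tau>)"
    then obtain \<tau> where t: "\<tau> \<in> Aset r i j a b" "\<omega> \<in> space M" "restrict (\<pi> \<omega>) (tree_upto r) = \<tau>" by auto
    have "\<pi> \<omega> i = \<tau> i" "\<pi> \<omega> j = \<tau> j" using t(3) ij by auto
    then show "\<omega> \<in> {\<omega>\<in>space M. \<pi> \<omega> i = a \<and> \<pi> \<omega> j = b}" using t unfolding Aset_def by auto
  qed
  have fin: "finite (Aset r i j a b)" using finite_Rset unfolding Aset_def by simp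
  have "prob (\<Union>\<tau>\<in>Aset r i j a b. ?E \<tau>) = (\<Sum>\<tau>\<in>Aset r i j a b. prob (?E \<tau>))"
    by (rule finite_measure_finite_Union[OF fin])
       (use prob_restrict(1) in \<open>auto simp: Aset_def disjoint_family_on_def\<close>)
  also have "\<dots> = (\<Sum>\<tau>\<in>Aset r i j a b. 1 / Pi_r r)"
    by (rule sum.cong) (auto simp: Aset_def prob_restrict(2))
  finally show ?thesis unfolding eq by simp
qed

definition Off :: "nat \<Rightarrow> (nat \<times> nat) set" where
  "Off q = Sigma (gen q) (\<lambda>a. gen q - {a})"

lemma finite_Off[simp]: "finite (Off q)" unfolding Off_def by simp

lemma card_Off: "card (Off q) = 2^q * (2^q - 1)"
  unfolding Off_def by (subst card_SigmaI) (auto simp: card_gen)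

lemma pair_law:
  assumes ij: "i \<in> gen q" "j \<in> gen q" "i \<noteq> j" and ab: "(a, b) \<in> Off q"
  shows "prob {\<omega>\<in>space M. \<pi> \<omega> i = a \<and> \<pi> \<omega> j = b} = 1 / card (Off q)"
proof -
  have ijT: "i \<in> tree_upto q" "j \<in> tree_upto q" using ij gen_sub_tree[of q q] by auto
  let ?p = "\<lambda>(a,b). prob {\<omega>\<in>space M. \<pi> \<omega> i = a \<and> \<pi> \<omega> j = b}"
  have const: "?p (a', b') = ?p (a, b)" if "(a', b') \<in> Off q" for a' b'
    using that ab card_Aset_eq[OF ijT, of a' q b' a b] unfolding prob_pair_card[OF ijT] Off_def by auto
  have part: "space M = (\<Union>ab\<in>Off q. {\<omega>\<in>space M. \<pi> \<omega> i = fst ab \<and> \<pi> \<omega> j = snd ab})"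
  proof safe
    fix \<omega> assume w: "\<omega> \<in> space M"
    have "(\<pi> \<omega> i, \<pi> \<omega> j) \<in> Off q"
      using gen_perm_into[OF pi_perm[OF w]] gen_perm_inj[OF pi_perm[OF w]] ij unfolding Off_def by auto
    then show "\<omega> \<in> (\<Union>ab\<in>Off q. {\<omega>\<in>space M. \<pi> \<omega> i = fst ab \<and> \<pi> \<omega> j = snd ab})" using w by force
  qed
  have "1 = prob (\<Union>ab\<in>Off q. {\<omega>\<in>space M. \<pi> \<omega> i = fst ab \<and> \<pi> \<omega> j = snd ab})"
    using part prob_space by simp
  also have "\<dots> = (\<Sum>ab\<in>Off q. prob {\<omega>\<in>space M. \<pi> \<omega> i = fst ab \<and> \<pi> \<omega> j = snd ab})"
    by (rule finite_measure_finite_Union) (auto simp: disjoint_family_on_def)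
  also have "\<dots> = (\<Sum>ab\<in>Off q. ?p (a, b))"
    by (rule sum.cong) (use const in auto)
  also have "\<dots> = card (Off q) * ?p (a, b)" by simp
  finally have e: "card (Off q) * ?p (a, b) = 1" by simp
  then have "real (card (Off q)) \<noteq> 0" by auto
  then show ?thesis using e by (simp add: nonzero_eq_divide_eq mult.commute)
qed

end

context bmcp begin

lemma pi_gen: "\<omega> \<in> space M \<Longrightarrow> i \<in> gen q \<Longrightarrow> \<pi> \<omega> i \<in> gen q"
  using gen_perm_into[OF pi_perm] by blast

lemma window:
  fixes \<phi> :: "nat \<Rightarrow> (nat \<Rightarrow> 'a) \<Rightarrow> real" and K :: real
  assumes \<phi>m[measurable]: "\<And>a. \<phi> a \<in> borel_measurable (Pi\<^sub>M UNIV (\<lambda>_. borel))"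
    and \<phi>b: "\<And>a x. \<bar>\<phi> a x\<bar> \<le> K"
    and I: "I \<subseteq> gen q"
  shows "(\<integral>\<omega>. (\<Sum>i\<in>I. \<phi> (\<pi> \<omega> i) (Xv \<omega>))\<^sup>2 \<partial>M)
     \<le> card I * K\<^sup>2 + (\<integral>\<omega>. (\<Sum>a\<in>gen q. \<phi> a (Xv \<omega>))\<^sup>2 \<partial>M)"
proof -
  have finI: "finite I" using finite_subset[OF I finite_gen] .
  define Z where "Z = (\<lambda>i \<omega>. \<phi> (\<pi> \<omega> i) (Xv \<omega>))"
  have Zm[measurable]: "Z i \<in> borel_measurable M" for i
    unfolding Z_def by (rule measurable_compose_countable[where g="\<lambda>\<omega>. \<pi> \<omega> i"]) auto
  have prodb: "\<bar>u * v\<bar> \<le> K\<^sup>2" if "\<bar>u\<bar> \<le> K" "\<bar>v\<bar> \<le> K" for u v :: real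
  proof -
    have "\<bar>u * v\<bar> \<le> K * K" unfolding abs_mult by (rule mult_mono) (use that in auto)
    then show ?thesis by (simp add: power2_eq_square)
  qed
  have K0: "0 \<le> K" using \<phi>b[of 0 undefined] by linarith
  have e1: "(\<integral>\<omega>. (\<Sum>i\<in>I. Z i \<omega>)\<^sup>2 \<partial>M) = (\<Sum>i\<in>I. \<Sum>j\<in>I. \<integral>\<omega>. Z i \<omega> * Z j \<omega> \<partial>M)"
    apply (rule int_sq_sum[OF finI]) apply simp unfolding Z_def using \<phi>b by blast
  define E2 where "E2 = (\<integral>\<omega>. (\<Sum>a\<in>gen q. \<phi> a (Xv \<omega>))\<^sup>2 \<partial>M)"
  define F where "F = (\<lambda>a b. \<integral>\<omega>. \<phi> a (Xv \<omega>) * \<phi> b (Xv \<omega>) \<partial>M)"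
  have E2: "E2 = (\<Sum>a\<in>gen q. \<Sum>b\<in>gen q. F a b)"
    unfolding E2_def F_def apply (rule int_sq_sum) apply simp apply simp using \<phi>b by blast
  have E2pos: "0 \<le> E2" unfolding E2_def by simp
  have Fdiag: "0 \<le> F a a" for a unfolding F_def by simp
  have split: "(\<Sum>a\<in>gen q. \<Sum>b\<in>gen q. F a b) = (\<Sum>a\<in>gen q. F a a) + (\<Sum>ab\<in>Off q. F (fst ab) (snd ab))"
  proof -
    have "(\<Sum>a\<in>gen q. \<Sum>b\<in>gen q. F a b) = (\<Sum>a\<in>gen q. F a a + (\<Sum>b\<in>gen q - {a}. F a b))"
      by (rule sum.cong[OF refl]) (simp add: sum.remove)
    also have "\<dots> = (\<Sum>a\<in>gen q. F a a) + (\<Sum>a\<in>gen q. \<Sum>b\<in>gen q - {a}. F a b)"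
      by (simp add: sum.distrib)
    also have "(\<Sum>a\<in>gen q. \<Sum>b\<in>gen q - {a}. F a b) = (\<Sum>ab\<in>Off q. F (fst ab) (snd ab))"
      unfolding Off_def by (subst sum.Sigma) (auto simp: split_beta)
    finally show ?thesis .
  qed
  define \<kappa> where "\<kappa> = (\<Sum>ab\<in>Off q. F (fst ab) (snd ab)) / card (Off q)"
  have off: "(\<integral>\<omega>. Z i \<omega> * Z j \<omega> \<partial>M) = \<kappa>" if ij: "i \<in> gen q" "j \<in> gen q" "i \<noteq> j" for i j
  proof -
    define g1 where "g1 = (\<lambda>ab (\<sigma>::nat\<Rightarrow>nat). if (\<sigma> i, \<sigma> j) = ab then 1 else (0::real))"
    define h where "h = (\<lambda>ab x. \<phi> (fst ab) x * \<phi> (snd ab) x)"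
    have pw: "Z i \<omega> * Z j \<omega> = (\<Sum>ab\<in>Off q. g1 ab (\<pi> \<omega>) * h ab (Xv \<omega>))" if w: "\<omega> \<in> space M" for \<omega>
    proof -
      have "(\<pi> \<omega> i, \<pi> \<omega> j) \<in> Off q"
        using pi_gen[OF w] gen_perm_inj[OF pi_perm[OF w]] ij unfolding Off_def by auto
      then have mem: "(\<pi> \<omega> i, \<pi> \<omega> j) \<in> Off q" .
      have "(\<Sum>ab\<in>Off q. g1 ab (\<pi> \<omega>) * h ab (Xv \<omega>)) = (\<Sum>ab\<in>Off q. if (\<pi> \<omega> i, \<pi> \<omega> j) = ab then h ab (Xv \<omega>) else 0)"
        by (rule sum.cong) (auto simp: g1_def)
      also have "\<dots> = h (\<pi> \<omega> i, \<pi> \<omega> j) (Xv \<omega>)" using mem by simp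
      finally show ?thesis by (simp add: h_def Z_def)
    qed
    have g1m[measurable]: "g1 ab \<in> borel_measurable (Pi\<^sub>M UNIV (\<lambda>_. count_space UNIV))" for ab
      unfolding g1_def by measurable
    have hm[measurable]: "h ab \<in> borel_measurable (Pi\<^sub>M UNIV (\<lambda>_. borel))" for ab
      unfolding h_def by measurable
    have g1b: "\<bar>g1 ab s\<bar> \<le> 1" for ab s unfolding g1_def by auto
    have hb: "\<bar>h ab x\<bar> \<le> K\<^sup>2" for ab x unfolding h_def using prodb \<phi>b by blast
    have g1int: "(\<integral>\<omega>. g1 ab (\<pi> \<omega>) \<partial>M) = 1 / card (Off q)" if ab: "ab \<in> Off q" for ab
    proof -
      have "(\<integral>\<omega>. g1 ab (\<pi> \<omega>) \<partial>M) = (\<integral>\<omega>. indicator {\<omega>\<in>space M. \<pi> \<omega> i = fst ab \<and> \<pi> \<omega> j = snd ab} \<omega> \<partial>M)"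
        by (rule Bochner_Integration.integral_cong) (auto simp: g1_def indicator_def)
      also have "\<dots> = prob {\<omega>\<in>space M. \<pi> \<omega> i = fst ab \<and> \<pi> \<omega> j = snd ab}"
        by (simp add: Int_absorb2)
      also have "\<dots> = 1 / card (Off q)" using pair_law[OF ij, of "fst ab" "snd ab"] ab by simp
      finally show ?thesis .
    qed
    have "(\<integral>\<omega>. Z i \<omega> * Z j \<omega> \<partial>M) = (\<integral>\<omega>. (\<Sum>ab\<in>Off q. g1 ab (\<pi> \<omega>) * h ab (Xv \<omega>)) \<partial>M)"
      by (rule Bochner_Integration.integral_cong) (use pw in auto)
    also have "\<dots> = (\<Sum>ab\<in>Off q. \<integral>\<omega>. g1 ab (\<pi> \<omega>) * h ab (Xv \<omega>) \<partial>M)"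
    proof (rule Bochner_Integration.integral_sum)
      fix ab
      show "integrable M (\<lambda>\<omega>. g1 ab (\<pi> \<omega>) * h ab (Xv \<omega>))"
      proof (rule integrable_bnd[where C="1 * K\<^sup>2"])
        show "\<bar>g1 ab (\<pi> \<omega>) * h ab (Xv \<omega>)\<bar> \<le> 1 * K\<^sup>2" for \<omega>
          unfolding abs_mult by (rule mult_mono) (use g1b hb in auto)
      qed simp
    qed
    also have "\<dots> = (\<Sum>ab\<in>Off q. (\<integral>\<omega>. g1 ab (\<pi> \<omega>) \<partial>M) * (\<integral>\<omega>. h ab (Xv \<omega>) \<partial>M))"
      by (rule sum.cong[OF refl], rule indep_int[OF g1m g1b hm hb])
    also have "\<dots> = (\<Sum>ab\<in>Off q. (1 / card (Off q)) * F (fst ab) (snd ab))"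
      by (rule sum.cong[OF refl]) (simp add: g1int F_def h_def)
    also have "\<dots> = \<kappa>" unfolding \<kappa>_def by (simp add: sum_divide_distrib)
    finally show ?thesis .
  qed
  have diag: "(\<integral>\<omega>. Z i \<omega> * Z i \<omega> \<partial>M) \<le> K\<^sup>2" for i
  proof -
    have "(\<integral>\<omega>. Z i \<omega> * Z i \<omega> \<partial>M) \<le> (\<integral>\<omega>. K\<^sup>2 \<partial>M)"
    proof (rule integral_mono)
      show "integrable M (\<lambda>\<omega>. Z i \<omega> * Z i \<omega>)"
      proof (rule integrable_bnd[where C="K\<^sup>2"])
        show "\<bar>Z i \<omega> * Z i \<omega>\<bar> \<le> K\<^sup>2" for \<omega> unfolding Z_def by (rule prodb[OF \<phi>b \<phi>b])
      qed simp
      show "Z i \<omega> * Z i \<omega> \<le> K\<^sup>2" for \<omega>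
        using prodb[OF \<phi>b \<phi>b, of "\<pi> \<omega> i" "Xv \<omega>" "\<pi> \<omega> i" "Xv \<omega>"] unfolding Z_def by linarith
    qed simp
    then show ?thesis by (simp add: prob_space)
  qed
  have "(\<Sum>i\<in>I. \<Sum>j\<in>I. \<integral>\<omega>. Z i \<omega> * Z j \<omega> \<partial>M)
      = (\<Sum>i\<in>I. (\<integral>\<omega>. Z i \<omega> * Z i \<omega> \<partial>M) + (\<Sum>j\<in>I - {i}. \<integral>\<omega>. Z i \<omega> * Z j \<omega> \<partial>M))"
    by (rule sum.cong[OF refl]) (simp add: sum.remove finI)
  also have "\<dots> = (\<Sum>i\<in>I. (\<integral>\<omega>. Z i \<omega> * Z i \<omega> \<partial>M) + (\<Sum>j\<in>I - {i}. \<kappa>))"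
    by (rule sum.cong[OF refl], rule arg_cong[where f="(+) _"], rule sum.cong[OF refl])
       (use off I in auto)
  also have "\<dots> = (\<Sum>i\<in>I. (\<integral>\<omega>. Z i \<omega> * Z i \<omega> \<partial>M)) + real (card I) * (real (card I) - 1) * \<kappa>"
  proof -
    have "(\<Sum>i\<in>I. (\<Sum>j\<in>I - {i}. \<kappa>)) = (\<Sum>i\<in>I. (real (card I) - 1) * \<kappa>)"
    proof (rule sum.cong[OF refl])
      fix x assume x: "x \<in> I"
      then have "1 \<le> card I" using finI card_gt_0_iff by (metis One_nat_def Suc_leI empty_iff)
      then show "(\<Sum>j\<in>I - {x}. \<kappa>) = (real (card I) - 1) * \<kappa>"
        using x finI by (simp add: card_Diff_singleton of_nat_diff)
    qed
    then show ?thesis by (simp add: sum.distrib)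
  qed
  also have "\<dots> \<le> real (card I) * K\<^sup>2 + E2"
  proof -
    have d: "(\<Sum>i\<in>I. (\<integral>\<omega>. Z i \<omega> * Z i \<omega> \<partial>M)) \<le> real (card I) * K\<^sup>2"
      using sum_mono[of I "\<lambda>i. (\<integral>\<omega>. Z i \<omega> * Z i \<omega> \<partial>M)" "\<lambda>_. K\<^sup>2", OF diag] by simp
    have o: "real (card I) * (real (card I) - 1) * \<kappa> \<le> E2"
    proof (cases "\<kappa> \<le> 0")
      case True
      have "0 \<le> real (card I) * (real (card I) - 1)"
        by (cases "card I") auto
      then have "real (card I) * (real (card I) - 1) * \<kappa> \<le> 0"
        using True by (simp add: mult_nonneg_nonpos)
      then show ?thesis using E2pos by linarith
    next
      case False
      have cI: "card I \<le> 2^q" using card_mono[OF finite_gen I] card_gen by simp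
      have "real (card I) * (real (card I) - 1) \<le> 2^q * (2^q - 1)"
      proof (cases "card I")
        case 0 then show ?thesis by simp
      next
        case (Suc n)
        have "real (card I) \<le> 2^q" using cI by (metis of_nat_le_iff of_nat_numeral of_nat_power)
        then show ?thesis using Suc by (intro mult_mono) auto
      qed
      also have "\<dots> = real (card (Off q))"
        unfolding card_Off by (simp add: of_nat_diff)
      finally have cc: "real (card I) * (real (card I) - 1) \<le> real (card (Off q))" .
      have "card (Off q) \<noteq> 0" using False unfolding \<kappa>_def by auto
      then have k: "real (card (Off q)) * \<kappa> = (\<Sum>ab\<in>Off q. F (fst ab) (snd ab))"
        unfolding \<kappa>_def by simp
      have "real (card I) * (real (card I) - 1) * \<kappa> \<le> real (card (Off q)) * \<kappa>"
        using cc False by (intro mult_right_mono) auto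
      also have "\<dots> \<le> E2" unfolding k E2 split
        using sum_nonneg[of "gen q" "\<lambda>a. F a a"] Fdiag by simp
      finally show ?thesis .
    qed
    show ?thesis using d o by linarith
  qed
  finally show ?thesis using e1 unfolding Z_def E2_def by simp
qed

end

lemma lip_bound:
  fixes a :: "nat \<Rightarrow> real"
  assumes d: "\<And>m. \<bar>a (Suc m) - a m\<bar> \<le> L"
  shows "\<bar>a (n + k) - a n\<bar> \<le> L * k"
proof (induction k)
  case 0 then show ?case by simp
next
  case (Suc k)
  have "\<bar>a (n + Suc k) - a n\<bar> \<le> \<bar>a (Suc (n + k)) - a (n + k)\<bar> + \<bar>a (n + k) - a n\<bar>" by simp
  also have "\<dots> \<le> L + L * k" using d[of "n+k"] Suc by linarith
  finally show ?case by (simp add: algebra_simps)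
qed

lemma det_lemma:
  fixes a :: "nat \<Rightarrow> real"
  assumes d: "\<And>m. \<bar>a (Suc m) - a m\<bar> \<le> K"
    and V: "(\<lambda>r. (\<Sum>m\<in>gen r. (a m)\<^sup>2) / 8^r) \<longlonglongrightarrow> 0"
  shows "(\<lambda>n. a n / real n) \<longlonglongrightarrow> 0"
proof (rule LIMSEQ_I)
  fix \<epsilon> :: real assume \<epsilon>: "0 < \<epsilon>"
  define L where "L = K + 1"
  have K0: "0 \<le> K" using d[of 0] by linarith
  then have L0: "0 < L" unfolding L_def by simp
  have dL: "\<bar>a (Suc m) - a m\<bar> \<le> L" for m using d[of m] unfolding L_def by linarith
  define e where "e = min \<epsilon> L"
  have e0: "0 < e" "e \<le> \<epsilon>" "e \<le> L" unfolding e_def using \<epsilon> L0 by auto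
  define \<delta> where "\<delta> = e^3 / (144 * L)"
  have \<delta>0: "0 < \<delta>" unfolding \<delta>_def using e0 L0 by simp
  define V where "V = (\<lambda>r. (\<Sum>m\<in>gen r. (a m)\<^sup>2) / 8^r)"
  obtain R where R: "\<And>r. r \<ge> R \<Longrightarrow> norm (V r - 0) < \<delta>"
    using LIMSEQ_D[OF V[folded V_def] \<delta>0] by blast
  have V0: "0 \<le> V r" for r unfolding V_def by (simp add: sum_nonneg)
  have main: "\<bar>a n\<bar> < e * 2^r" if r: "r \<ge> R" and n: "n \<in> gen r" for r n
  proof (rule ccontr)
    assume "\<not> \<bar>a n\<bar> < e * 2^r"
    then have big: "e * 2^r \<le> \<bar>a n\<bar>" by simp
    define h where "h = nat \<lfloor>e * 2^r / (2 * L)\<rfloor>"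
    have h1: "real h \<le> e * 2^r / (2 * L)" unfolding h_def using e0 L0 by simp
    have x0: "0 \<le> e * 2^r / (2 * L)" using e0 L0 by simp
    have hx: "real h = of_int \<lfloor>e * 2^r / (2 * L)\<rfloor>" unfolding h_def using x0 by simp
    have h2: "e * 2^r / (2 * L) < real h + 1" unfolding hx using floor_correct[of "e * 2^r / (2 * L)"] by linarith
    have hL: "L * real h \<le> e * 2^r / 2" using h1 L0 by (simp add: field_simps)
    have "real h \<le> 2^r / 2"
    proof -
      have "e * 2^r / (2 * L) \<le> L * 2^r / (2 * L)" using e0 by (intro divide_right_mono mult_right_mono) auto
      also have "\<dots> = 2^r / 2" using L0 by simp
      finally show ?thesis using h1 by linarith
    qed
    moreover have "(2::real)^r / 2 < 2^r" by simp
    ultimately have "real h < (2::real)^r" by linarith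
    then have "real h < real ((2::nat)^r)" by simp
    then have hle: "h < 2^r" by (simp only: of_nat_less_iff)
    have nr: "2^r \<le> n" "n < 2^(r+1)" using n unfolding gen_def by auto
    have sub: "{n..n+h} \<subseteq> gen r \<union> gen (Suc r)"
    proof
      fix m assume "m \<in> {n..n+h}"
      then have "2^r \<le> m" "m < 2^(r+2)" using nr hle by (auto simp: power_add)
      then show "m \<in> gen r \<union> gen (Suc r)" unfolding gen_def by auto
    qed
    have lower: "(e * 2^r / 2)\<^sup>2 \<le> (a m)\<^sup>2" if m: "m \<in> {n..n+h}" for m
    proof -
      define k where "k = m - n"
      have k: "m = n + k" "k \<le> h" using m unfolding k_def by auto
      have "\<bar>a m - a n\<bar> \<le> L * k" unfolding k by (rule lip_bound[where a=a, OF dL])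
      moreover have "L * k \<le> L * h" using k L0 by simp
      ultimately have "e * 2^r / 2 \<le> \<bar>a m\<bar>" using big hL by linarith
      moreover have "0 \<le> e * 2^r / 2" using e0 by simp
      ultimately show ?thesis using power_mono[of "e * 2^r / 2" "\<bar>a m\<bar>" 2] by simp
    qed
    have "(real h + 1) * (e * 2^r / 2)\<^sup>2 = (\<Sum>m\<in>{n..n+h}. (e * 2^r / 2)\<^sup>2)" by simp
    also have "\<dots> \<le> (\<Sum>m\<in>{n..n+h}. (a m)\<^sup>2)" by (rule sum_mono[OF lower])
    also have "\<dots> \<le> (\<Sum>m\<in>gen r \<union> gen (Suc r). (a m)\<^sup>2)"
      by (rule sum_mono2[OF _ sub]) (auto simp: gen_def)
    also have "\<dots> = (\<Sum>m\<in>gen r. (a m)\<^sup>2) + (\<Sum>m\<in>gen (Suc r). (a m)\<^sup>2)"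
      by (rule sum.union_disjoint) (auto simp: gen_def)
    also have "\<dots> = 8^r * V r + 8^(Suc r) * V (Suc r)" unfolding V_def by simp
    also have "\<dots> \<le> 8^r * \<delta> + 8^(Suc r) * \<delta>"
      using R[of r] R[of "Suc r"] r V0[of r] V0[of "Suc r"] by (intro add_mono mult_left_mono) auto
    also have "\<dots> = 8^r * (9 * \<delta>)" by simp
    finally have A: "(real h + 1) * (e * 2^r / 2)\<^sup>2 \<le> 8^r * (9 * \<delta>)" .
    have "e * 2^r / (2 * L) * (e * 2^r / 2)\<^sup>2 \<le> (real h + 1) * (e * 2^r / 2)\<^sup>2"
      using h2 by (intro mult_right_mono) auto
    also note A
    finally have B: "e * 2^r / (2 * L) * (e * 2^r / 2)\<^sup>2 \<le> 8^r * (9 * \<delta>)" .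
    have E1: "e * 2^r / (2 * L) * (e * 2^r / 2)\<^sup>2 = 8^r * (e^3 / (8 * L))"
      by (simp add: field_simps power2_eq_square power3_eq_cube power_mult_distrib[symmetric])
    have E2: "8^r * (9 * \<delta>) = 8^r * (e^3 / (16 * L))" unfolding \<delta>_def by simp
    have "e^3 / (16 * L) < e^3 / (8 * L)" using e0 L0 by (simp add: field_simps)
    then have lt: "8^r * (e^3 / (16 * L)) < 8^r * (e^3 / (8 * L))"
      by (intro mult_strict_left_mono) auto
    show False using B E1 E2 lt by linarith
  qed
  show "\<exists>N. \<forall>n\<ge>N. norm (a n / real n - 0) < \<epsilon>"
  proof (intro exI allI impI)
    fix n :: nat assume n: "n \<ge> 2^R"
    moreover have "(1::nat) \<le> 2^R" by simp
    ultimately have "n \<ge> 1" by linarith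
    then obtain r where r: "2^r \<le> n" "n < 2^(r+1)" using ex_power_ivl1[of 2 n] by auto
    have "R < r + 1"
    proof (rule ccontr)
      assume "\<not> R < r + 1"
      then have "(2::nat)^(r+1) \<le> 2^R" by (intro power_increasing) auto
      then show False using n r by linarith
    qed
    then have "n \<in> gen r" "r \<ge> R" using r unfolding gen_def by auto
    then have "\<bar>a n\<bar> < e * 2^r" using main by blast
    also have "\<dots> \<le> \<epsilon> * n" using e0 r(1) \<epsilon>
      by (intro mult_mono) (auto simp: of_nat_le_iff[symmetric])
    finally have "\<bar>a n\<bar> < \<epsilon> * n" .
    moreover have "0 < real n" using \<open>n \<ge> 1\<close> by simp
    ultimately show "norm (a n / real n - 0) < \<epsilon>" by (simp add: abs_div pos_divide_less_eq)
  qed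
qed


locale bmcall = bmcp M X P \<nu> \<pi> + bmcg M X P \<nu> g c \<alpha>
  for M :: "'b measure" and X :: "nat \<Rightarrow> 'b \<Rightarrow> 'a::metric_space" and P \<nu> \<pi> g c \<alpha> +
  fixes f :: "'a \<times> 'a \<times> 'a \<Rightarrow> real" and K :: real
  assumes fm[measurable]: "f \<in> borel_measurable S3" and fb: "\<And>x. \<bar>f x\<bar> \<le> K" and g_def: "g = Pop P f"
begin

definition "\<phi> a x = f (x a, x (2*a), x (2*a+1))"

lemma \<phi>m[measurable]: "\<phi> a \<in> borel_measurable (Pi\<^sub>M UNIV (\<lambda>_. borel))"
  unfolding \<phi>_def by measurable

lemma \<phi>X: "\<phi> a (Xv \<omega>) = f (Dl a \<omega>)" unfolding \<phi>_def Xv_def Dl_def by simp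

lemma \<phi>b: "\<bar>\<phi> a x\<bar> \<le> K" unfolding \<phi>_def by (rule fb)

definition "Bc = 2 * K\<^sup>2 + c\<^sup>2 * Ac"

lemma pow_le: "(2::real)^q \<le> (4*\<gamma>)^q" using \<gamma>_props by (intro power_mono) auto

lemma piece:
  assumes I: "I \<subseteq> gen q"
  shows "(\<integral>\<omega>. (\<Sum>i\<in>I. \<phi> (\<pi> \<omega> i) (Xv \<omega>))\<^sup>2 \<partial>M) \<le> Bc * (4*\<gamma>)^q"
proof -
  have "(\<integral>\<omega>. (\<Sum>i\<in>I. \<phi> (\<pi> \<omega> i) (Xv \<omega>))\<^sup>2 \<partial>M)
     \<le> card I * K\<^sup>2 + (\<integral>\<omega>. (\<Sum>a\<in>gen q. \<phi> a (Xv \<omega>))\<^sup>2 \<partial>M)"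
    by (rule window[OF \<phi>m \<phi>b I])
  also have "(\<integral>\<omega>. (\<Sum>a\<in>gen q. \<phi> a (Xv \<omega>))\<^sup>2 \<partial>M) = (\<integral>\<omega>. (\<Sum>a\<in>gen q. f (Dl a \<omega>))\<^sup>2 \<partial>M)"
    by (simp add: \<phi>X)
  also have "\<dots> \<le> 2^q * K\<^sup>2 + (\<integral>\<omega>. (\<Sum>l\<in>gen q. Pop P f (X l \<omega>))\<^sup>2 \<partial>M)"
    by (rule Lsq[OF fm fb])
  also have "(\<integral>\<omega>. (\<Sum>l\<in>gen q. Pop P f (X l \<omega>))\<^sup>2 \<partial>M) = (\<integral>\<omega>. (\<Sum>l\<in>gen q. (Qop P ^^ 0) g (X l \<omega>))\<^sup>2 \<partial>M)"
    by (simp add: g_def)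
  also have "\<dots> \<le> c\<^sup>2 * \<alpha>^(2*0) * Ac * (4*\<gamma>)^q" by (rule gen_bound)
  finally have 1: "(\<integral>\<omega>. (\<Sum>i\<in>I. \<phi> (\<pi> \<omega> i) (Xv \<omega>))\<^sup>2 \<partial>M) \<le> card I * K\<^sup>2 + (2^q * K\<^sup>2 + c\<^sup>2 * Ac * (4*\<gamma>)^q)"
    by simp
  have cI: "real (card I) \<le> 2^q"
  proof -
    have "card I \<le> 2^q" using card_mono[OF finite_gen I] card_gen by simp
    then have "real (card I) \<le> real ((2::nat)^q)" by (simp only: of_nat_le_iff)
    then show ?thesis by simp
  qed
  have "real (card I) \<le> (4*\<gamma>)^q" using cI pow_le[of q] by linarith
  then have "card I * K\<^sup>2 \<le> (4*\<gamma>)^q * K\<^sup>2" by (intro mult_right_mono) auto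
  moreover have "2^q * K\<^sup>2 \<le> (4*\<gamma>)^q * K\<^sup>2" using pow_le by (intro mult_right_mono) auto
  ultimately show ?thesis using 1 unfolding Bc_def by (simp add: algebra_simps)
qed

definition "T m \<omega> = (\<Sum>i\<in>{1..m}. \<phi> (\<pi> \<omega> i) (Xv \<omega>))"

lemma Z_meas[measurable]: "(\<lambda>\<omega>. \<phi> (\<pi> \<omega> i) (Xv \<omega>)) \<in> borel_measurable M"
  by (rule measurable_compose_countable[where g="\<lambda>\<omega>. \<pi> \<omega> i"]) auto

lemma T_meas[measurable]: "T m \<in> borel_measurable M"
  unfolding T_def by measurable

lemma T_bnd: "\<bar>T m \<omega>\<bar> \<le> m * K"
proof -
  have "\<bar>T m \<omega>\<bar> \<le> (\<Sum>i\<in>{1..m}. \<bar>\<phi> (\<pi> \<omega> i) (Xv \<omega>)\<bar>)" unfolding T_def by (rule sum_abs)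
  also have "\<dots> \<le> (\<Sum>i\<in>{1..m}. K)" by (rule sum_mono) (rule \<phi>b)
  finally show ?thesis by simp
qed

lemma gen_ex: "1 \<le> i \<Longrightarrow> \<exists>q. i \<in> gen q"
  using ex_power_ivl1[of 2 i] unfolding gen_def by auto

lemma gen_le: "i \<in> gen q \<Longrightarrow> i < 2^(Suc r) \<Longrightarrow> q \<le> r"
proof (rule ccontr)
  assume a: "i \<in> gen q" "i < 2^(Suc r)" "\<not> q \<le> r"
  then have "(2::nat)^(Suc r) \<le> 2^q" by (intro power_increasing) auto
  then show False using a unfolding gen_def by auto
qed

lemma T_decomp:
  assumes m: "m < 2^(Suc r)"
  shows "T m \<omega> = (\<Sum>q\<le>r. \<Sum>i\<in>gen q \<inter> {1..m}. \<phi> (\<pi> \<omega> i) (Xv \<omega>))"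
proof -
  have U: "{1..m} = (\<Union>q\<in>{..r}. gen q \<inter> {1..m})"
  proof
    show "{1..m} \<subseteq> (\<Union>q\<in>{..r}. gen q \<inter> {1..m})"
    proof
      fix i assume i: "i \<in> {1..m}"
      then obtain q where q: "i \<in> gen q" using gen_ex by auto
      moreover have "q \<le> r" using gen_le[OF q] i m by auto
      ultimately show "i \<in> (\<Union>q\<in>{..r}. gen q \<inter> {1..m})" using i by auto
    qed
  qed auto
  have "T m \<omega> = (\<Sum>i\<in>(\<Union>q\<in>{..r}. gen q \<inter> {1..m}). \<phi> (\<pi> \<omega> i) (Xv \<omega>))"
    unfolding T_def using U by simp
  also have "\<dots> = (\<Sum>q\<le>r. \<Sum>i\<in>gen q \<inter> {1..m}. \<phi> (\<pi> \<omega> i) (Xv \<omega>))"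
    by (rule sum.UNION_disjoint) (auto dest: gen_disj)
  finally show ?thesis .
qed

definition "tt = sqrt (4 * \<gamma>)"

lemma tt_props: "1 < tt" "tt * tt = 4 * \<gamma>" "0 < tt"
proof -
  have "2 \<le> 4 * \<gamma>" using \<gamma>_props by simp
  then show "1 < tt" unfolding tt_def by (simp add: real_less_rsqrt)
  show "tt * tt = 4 * \<gamma>" unfolding tt_def using \<gamma>_props by simp
  then show "0 < tt" using \<open>1 < tt\<close> by simp
qed

lemma CS_weighted:
  fixes Y :: "nat \<Rightarrow> real"
  shows "(\<Sum>q\<le>r. Y q)\<^sup>2 \<le> (\<Sum>q\<le>r. tt^q) * (\<Sum>q\<le>r. (Y q)\<^sup>2 / tt^q)"
proof -
  have pos: "0 < tt^q" for q using tt_props by simp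
  have "(\<Sum>q\<le>r. Y q) = (\<Sum>q\<le>r. sqrt (tt^q) * (Y q / sqrt (tt^q)))"
    by (rule sum.cong[OF refl]) (use pos tt_props(3) in \<open>simp add: less_imp_le\<close>)
  then have "(\<Sum>q\<le>r. Y q)\<^sup>2 \<le> (\<Sum>q\<le>r. (sqrt (tt^q))\<^sup>2) * (\<Sum>q\<le>r. (Y q / sqrt (tt^q))\<^sup>2)"
    using Cauchy_Schwarz_ineq_sum by metis
  also have "\<dots> = (\<Sum>q\<le>r. tt^q) * (\<Sum>q\<le>r. (Y q)\<^sup>2 / tt^q)"
    using pos by (simp add: less_imp_le power_divide)
  finally show ?thesis .
qed

lemma T_bound:
  assumes m: "m < 2^(Suc r)"
  shows "(\<integral>\<omega>. (T m \<omega>)\<^sup>2 \<partial>M) \<le> Bc * (\<Sum>q\<le>r. tt^q)\<^sup>2"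
proof -
  define Y where "Y = (\<lambda>q \<omega>. \<Sum>i\<in>gen q \<inter> {1..m}. \<phi> (\<pi> \<omega> i) (Xv \<omega>))"
  have Ym[measurable]: "Y q \<in> borel_measurable M" for q unfolding Y_def by measurable
  have Yb: "\<bar>Y q \<omega>\<bar> \<le> card (gen q \<inter> {1..m}) * K" for q \<omega>
  proof -
    have "\<bar>Y q \<omega>\<bar> \<le> (\<Sum>i\<in>gen q \<inter> {1..m}. \<bar>\<phi> (\<pi> \<omega> i) (Xv \<omega>)\<bar>)" unfolding Y_def by (rule sum_abs)
    also have "\<dots> \<le> (\<Sum>i\<in>gen q \<inter> {1..m}. K)" by (rule sum_mono) (rule \<phi>b)
    finally show ?thesis by simp
  qed
  have Ysq_int: "integrable M (\<lambda>\<omega>. (Y q \<omega>)\<^sup>2)" for q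
    by (rule integrable_bnd[where C="(card (gen q \<inter> {1..m}) * K)\<^sup>2"]) (use sq_le[OF Yb] in auto)
  have pos: "0 < tt^q" for q using tt_props by simp
  have "(\<integral>\<omega>. (T m \<omega>)\<^sup>2 \<partial>M) \<le> (\<integral>\<omega>. (\<Sum>q\<le>r. tt^q) * (\<Sum>q\<le>r. (Y q \<omega>)\<^sup>2 / tt^q) \<partial>M)"
  proof (rule integral_mono)
    show "integrable M (\<lambda>\<omega>. (T m \<omega>)\<^sup>2)"
      by (rule integrable_bnd[where C="(m*K)\<^sup>2"]) (use sq_le[OF T_bnd] in auto)
    show "integrable M (\<lambda>\<omega>. (\<Sum>q\<le>r. tt^q) * (\<Sum>q\<le>r. (Y q \<omega>)\<^sup>2 / tt^q))"
      by (auto intro!: integrable_sum Ysq_int)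
    show "(T m \<omega>)\<^sup>2 \<le> (\<Sum>q\<le>r. tt^q) * (\<Sum>q\<le>r. (Y q \<omega>)\<^sup>2 / tt^q)" for \<omega>
      unfolding T_decomp[OF m] Y_def by (rule CS_weighted)
  qed
  also have "\<dots> = (\<Sum>q\<le>r. tt^q) * (\<Sum>q\<le>r. (\<integral>\<omega>. (Y q \<omega>)\<^sup>2 \<partial>M) / tt^q)"
  proof -
    have "(\<integral>\<omega>. (\<Sum>q\<le>r. (Y q \<omega>)\<^sup>2 / tt^q) \<partial>M) = (\<Sum>q\<le>r. (\<integral>\<omega>. (Y q \<omega>)\<^sup>2 / tt^q \<partial>M))"
      by (rule Bochner_Integration.integral_sum) (simp add: Ysq_int)
    then show ?thesis by simp
  qed
  also have "\<dots> \<le> (\<Sum>q\<le>r. tt^q) * (\<Sum>q\<le>r. Bc * tt^q)"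
  proof (intro mult_left_mono sum_mono)
    fix q
    have "(\<integral>\<omega>. (Y q \<omega>)\<^sup>2 \<partial>M) \<le> Bc * (4*\<gamma>)^q" unfolding Y_def by (rule piece) auto
    also have "(4*\<gamma>)^q = tt^q * tt^q" using tt_props(2) by (metis power_mult_distrib)
    finally have "(\<integral>\<omega>. (Y q \<omega>)\<^sup>2 \<partial>M) \<le> Bc * tt^q * tt^q" by (simp add: mult_ac)
    then show "(\<integral>\<omega>. (Y q \<omega>)\<^sup>2 \<partial>M) / tt^q \<le> Bc * tt^q" using pos[of q] by (simp add: divide_le_eq)
  next
    show "0 \<le> (\<Sum>q\<le>r. tt^q)" using pos by (simp add: sum_nonneg less_imp_le)
  qed
  also have "\<dots> = Bc * (\<Sum>q\<le>r. tt^q)\<^sup>2"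
  proof -
    have "(\<Sum>q\<le>r. Bc * tt^q) = Bc * (\<Sum>q\<le>r. tt^q)" by (rule sum_distrib_left[symmetric])
    then show ?thesis by (simp only: power2_eq_square mult_ac)
  qed
  finally show ?thesis .
qed

end

context bmcall begin

lemma geo: "(\<Sum>q\<le>r. tt^q) \<le> tt^(Suc r) / (tt - 1)"
proof -
  have "(\<Sum>q\<le>r. tt^q) = (\<Sum>q<Suc r. tt^q)" by (simp add: lessThan_Suc_atMost)
  also have "\<dots> = (tt^(Suc r) - 1) / (tt - 1)" using tt_props by (intro geometric_sum) auto
  also have "\<dots> \<le> tt^(Suc r) / (tt - 1)" using tt_props by (intro divide_right_mono) auto
  finally show ?thesis .
qed

definition "C1 = Bc * (4*\<gamma>) / (tt - 1)\<^sup>2"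

lemma Bc_nonneg: "0 \<le> Bc" unfolding Bc_def using Ac_props by simp

lemma T_bound2:
  assumes m: "m \<in> gen r"
  shows "(\<integral>\<omega>. (T m \<omega>)\<^sup>2 \<partial>M) \<le> C1 * (4*\<gamma>)^r"
proof -
  have m2: "m < 2^(Suc r)" using m unfolding gen_def by simp
  have s0: "0 \<le> (\<Sum>q\<le>r. tt^q)" using tt_props by (simp add: sum_nonneg)
  have "(\<integral>\<omega>. (T m \<omega>)\<^sup>2 \<partial>M) \<le> Bc * (\<Sum>q\<le>r. tt^q)\<^sup>2" by (rule T_bound[OF m2])
  also have "\<dots> \<le> Bc * (tt^(Suc r) / (tt - 1))\<^sup>2"
    by (intro mult_left_mono power_mono geo s0 Bc_nonneg)
  also have "(tt^(Suc r) / (tt - 1))\<^sup>2 = (tt*tt)^(Suc r) / (tt - 1)\<^sup>2"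
    by (simp add: power_divide power_mult_distrib power2_eq_square)
  also have "Bc * ((tt*tt)^(Suc r) / (tt - 1)\<^sup>2) = C1 * (4*\<gamma>)^r"
    unfolding C1_def tt_props(2) by (simp add: field_simps)
  finally show ?thesis .
qed

definition "V r \<omega> = (\<Sum>m\<in>gen r. (T m \<omega>)\<^sup>2) / 8^r"

lemma V_meas[measurable]: "V r \<in> borel_measurable M" unfolding V_def by measurable

lemma V_nonneg: "0 \<le> V r \<omega>" unfolding V_def by (simp add: sum_nonneg)

lemma Tsq_int: "integrable M (\<lambda>\<omega>. (T m \<omega>)\<^sup>2)"
  by (rule integrable_bnd[where C="(m*K)\<^sup>2"]) (use sq_le[OF T_bnd] in auto)

lemma V_int: "integrable M (V r)"
  unfolding V_def by (auto intro!: integrable_sum Tsq_int)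

lemma EV: "(\<integral>\<omega>. V r \<omega> \<partial>M) \<le> C1 * \<gamma>^r"
proof -
  have "(\<integral>\<omega>. V r \<omega> \<partial>M) = (\<Sum>m\<in>gen r. (\<integral>\<omega>. (T m \<omega>)\<^sup>2 \<partial>M)) / 8^r"
    unfolding V_def by (simp add: Tsq_int)
  also have "\<dots> \<le> (\<Sum>m\<in>gen r. C1 * (4*\<gamma>)^r) / 8^r"
    by (intro divide_right_mono sum_mono T_bound2) auto
  also have "\<dots> = 2^r * C1 * (4*\<gamma>)^r / 8^r" by (simp add: card_gen)
  also have "\<dots> = C1 * \<gamma>^r"
  proof -
    have "(8::real)^r = 2^r * 4^r" by (simp add: power_mult_distrib[symmetric])
    then show ?thesis by (simp add: power_mult_distrib)
  qed
  finally show ?thesis .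
qed

lemma C1_nonneg: "0 \<le> C1" unfolding C1_def using Bc_nonneg \<gamma>_props by simp

lemma AE_V: "AE \<omega> in M. (\<lambda>r. V r \<omega>) \<longlonglongrightarrow> 0"
proof -
  have sg: "summable (\<lambda>r. C1 * \<gamma>^r)" using \<gamma>_props by (intro summable_mult summable_geometric) auto
  have "(\<integral>\<^sup>+\<omega>. (\<Sum>r. ennreal (V r \<omega>)) \<partial>M) = (\<Sum>r. \<integral>\<^sup>+\<omega>. ennreal (V r \<omega>) \<partial>M)"
    by (rule nn_integral_suminf) measurable
  also have "\<dots> = (\<Sum>r. ennreal (\<integral>\<omega>. V r \<omega> \<partial>M))"
    by (rule suminf_cong, rule nn_integral_eq_integral) (auto intro: V_int V_nonneg)
  also have "\<dots> \<le> (\<Sum>r. ennreal (C1 * \<gamma>^r))"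
    by (intro suminf_le ennreal_leI EV) auto
  also have "\<dots> = ennreal (\<Sum>r. C1 * \<gamma>^r)"
    by (rule suminf_ennreal2) (use sg C1_nonneg \<gamma>_props in auto)
  also have "\<dots> < \<infinity>" by simp
  finally have "(\<integral>\<^sup>+\<omega>. (\<Sum>r. ennreal (V r \<omega>)) \<partial>M) \<noteq> \<infinity>" by simp
  then have "AE \<omega> in M. (\<Sum>r. ennreal (V r \<omega>)) \<noteq> \<infinity>"
    by (intro nn_integral_PInf_AE) measurable
  then show ?thesis
  proof (rule AE_mp, intro AE_I2 impI)
    fix \<omega> assume "(\<Sum>r. ennreal (V r \<omega>)) \<noteq> \<infinity>"
    then have "summable (\<lambda>r. V r \<omega>)" by (intro summable_suminf_not_top V_nonneg) simp
    then show "(\<lambda>r. V r \<omega>) \<longlonglongrightarrow> 0" by (rule summable_LIMSEQ_zero)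
  qed
qed

lemma T_Suc: "\<bar>T (Suc m) \<omega> - T m \<omega>\<bar> \<le> K"
proof -
  have "T (Suc m) \<omega> = T m \<omega> + \<phi> (\<pi> \<omega> (Suc m)) (Xv \<omega>)"
    unfolding T_def by (simp add: add.commute)
  then show ?thesis using \<phi>b by simp
qed

lemma main_AE:
  "AE \<omega> in M. (\<lambda>n. (\<Sum>i=1..n. f (X (\<pi> \<omega> i) \<omega>, X (2 * \<pi> \<omega> i) \<omega>, X (2 * \<pi> \<omega> i + 1) \<omega>)) / real n) \<longlonglongrightarrow> 0"
  using AE_V
proof (rule AE_mp, intro AE_I2 impI)
  fix \<omega> assume "(\<lambda>r. V r \<omega>) \<longlonglongrightarrow> 0"
  then have "(\<lambda>n. T n \<omega> / real n) \<longlonglongrightarrow> 0"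
    by (intro det_lemma[where K=K] T_Suc) (simp add: V_def)
  moreover have "T n \<omega> = (\<Sum>i=1..n. f (X (\<pi> \<omega> i) \<omega>, X (2 * \<pi> \<omega> i) \<omega>, X (2 * \<pi> \<omega> i + 1) \<omega>))" for n
    unfolding T_def \<phi>_def Xv_def by simp
  ultimately show "(\<lambda>n. (\<Sum>i=1..n. f (X (\<pi> \<omega> i) \<omega>, X (2 * \<pi> \<omega> i) \<omega>, X (2 * \<pi> \<omega> i + 1) \<omega>)) / real n) \<longlonglongrightarrow> 0"
    by simp
qed

end

lemma part2:
  fixes M :: "'b measure" and X :: "nat \<Rightarrow> 'b \<Rightarrow> 'a::metric_space"
    and \<nu> \<mu> :: "'a measure" and P :: "'a \<Rightarrow> ('a \<times> 'a) measure"
    and \<pi> :: "'b \<Rightarrow> nat \<Rightarrow> nat"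
  assumes "prob_space M"
    and "T_transition P"
    and "BMC M X \<nu> P"
    and "uniform_gen_perm M \<pi> X"
    and "H2 P \<mu>"
    and f: "f \<in> bounded_meas S3" and f0: "(\<integral>x. Pop P f x \<partial>\<mu>) = 0"
  shows "AE \<omega> in M. (\<lambda>n. (\<Sum>i=1..n. f (X (\<pi> \<omega> i) \<omega>, X (2 * \<pi> \<omega> i) \<omega>, X (2 * \<pi> \<omega> i + 1) \<omega>))
                              / real n) \<longlonglongrightarrow> 0"
proof -
  interpret bmcp M X P \<nu> \<pi>
    using assms unfolding bmcp_def bmcs_def bmcp_axioms_def bmcs_axioms_def by auto
  obtain \<alpha> :: real where \<alpha>: "0 < \<alpha>" "\<alpha> < 1" and H: "\<forall>g \<in> bounded_meas (borel :: 'a measure). (\<integral>x. g x \<partial>\<mu>) = 0 \<longrightarrow>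
        (\<exists>c>0. \<forall>r x. \<bar>(Qop P ^^ r) g x\<bar> \<le> c * \<alpha>^r)"
    using \<open>H2 P \<mu>\<close> unfolding H2_def by blast
  from f obtain K where fm: "f \<in> borel_measurable S3" and fb: "\<And>x. \<bar>f x\<bar> \<le> K"
    unfolding bounded_meas_def by (auto simp: space_pair_measure)
  have gm: "Pop P f \<in> borel_measurable borel" by (rule Pop_measurable[OF TP fm])
  have gb: "\<bar>Pop P f x\<bar> \<le> K" for x by (rule Pop_bound[OF fm fb])
  have "Pop P f \<in> bounded_meas borel" unfolding bounded_meas_def using gm gb by blast
  then obtain c where c: "c > 0" "\<And>r x. \<bar>(Qop P ^^ r) (Pop P f) x\<bar> \<le> c * \<alpha>^r"
    using H f0 by blast
  interpret bmcall M X P \<nu> \<pi> "Pop P f" c \<alpha> f K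
    by unfold_locales (use gm c \<alpha> fm fb in auto)
  show ?thesis by (rule main_AE)
qed

theorem corollary3p3:
  fixes M :: "'b measure" and X :: "nat \<Rightarrow> 'b \<Rightarrow> 'a::metric_space"
    and \<nu> \<mu> :: "'a measure" and P :: "'a \<Rightarrow> ('a \<times> 'a) measure"
    and \<pi> :: "'b \<Rightarrow> nat \<Rightarrow> nat"
  assumes "prob_space M"
    and "T_transition P"
    and "BMC M X \<nu> P"
    and "uniform_gen_perm M \<pi> X"
    and "prob_space \<mu>" and "sets \<mu> = sets borel"
    and "H2 P \<mu>"
  shows "(\<forall>f \<in> bounded_meas (borel :: 'a measure). (\<integral>x. f x \<partial>\<mu>) = 0 \<longrightarrow>
            (AE \<omega> in M. (\<lambda>n. (\<Sum>i=1..n. f (X (\<pi> \<omega> i) \<omega>)) / real n) \<longlonglongrightarrow> 0))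
       \<and> (\<forall>f \<in> bounded_meas S3. (\<integral>x. Pop P f x \<partial>\<mu>) = 0 \<longrightarrow>
            (AE \<omega> in M. (\<lambda>n. (\<Sum>i=1..n. f (X (\<pi> \<omega> i) \<omega>, X (2 * \<pi> \<omega> i) \<omega>, X (2 * \<pi> \<omega> i + 1) \<omega>))
                              / real n) \<longlonglongrightarrow> 0))"
proof (intro conjI ballI impI)
  fix f :: "'a \<times> 'a \<times> 'a \<Rightarrow> real" assume "f \<in> bounded_meas S3" "(\<integral>x. Pop P f x \<partial>\<mu>) = 0"
  then show "AE \<omega> in M. (\<lambda>n. (\<Sum>i=1..n. f (X (\<pi> \<omega> i) \<omega>, X (2 * \<pi> \<omega> i) \<omega>, X (2 * \<pi> \<omega> i + 1) \<omega>))
                              / real n) \<longlonglongrightarrow> 0"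
    using part2[OF assms(1-4,7)] by blast
next
  fix f :: "'a \<Rightarrow> real" assume f: "f \<in> bounded_meas borel" and f0: "(\<integral>x. f x \<partial>\<mu>) = 0"
  interpret bmcs M X P \<nu>
    using assms unfolding bmcs_def bmcs_axioms_def by auto
  define F where "F = (\<lambda>(x::'a, y::'a, z::'a). f x)"
  from f obtain K where fm[measurable]: "f \<in> borel_measurable borel" and fb: "\<And>x. \<bar>f x\<bar> \<le> K"
    unfolding bounded_meas_def by auto
  have "F \<in> bounded_meas S3" unfolding bounded_meas_def F_def using fb by (auto intro!: exI[of _ K])
  moreover have PF: "Pop P F x = f x" for x
  proof -
    interpret Px: prob_space "P x" by (rule Pprob)
    show ?thesis unfolding Pop_def F_def by (simp add: Px.prob_space)
  qed
  moreover have "(\<integral>x. Pop P F x \<partial>\<mu>) = 0" unfolding PF using f0 .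
  ultimately have "AE \<omega> in M. (\<lambda>n. (\<Sum>i=1..n. F (X (\<pi> \<omega> i) \<omega>, X (2 * \<pi> \<omega> i) \<omega>, X (2 * \<pi> \<omega> i + 1) \<omega>))
                              / real n) \<longlonglongrightarrow> 0"
    using part2[OF assms(1-4,7)] by blast
  then show "AE \<omega> in M. (\<lambda>n. (\<Sum>i=1..n. f (X (\<pi> \<omega> i) \<omega>)) / real n) \<longlonglongrightarrow> 0"
    unfolding F_def by simp
qed


end
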